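(* Let $\Phi=(A;\{E_i\}_{i=0}^d;A^*;\{E^*_i\}_{i=0}^d)$ be a tridiagonal system on $V$ with $d\ge1$, such that $(A,A^* )$ satisfies the $q$-Serre relations, with $E_iV$ the eigenspace of $A$ for $\theta_i=q^{2i-d}$ and $E^*_iV$ the eigenspace of $A^*$ for $\theta^*_i=q^{d-2i}$. Let $\{U_i\}_{i=0}^d$ be its split decomposition, $K:V\to V$ the linear map acting on $U_i$ as $q^{d-2i}I$, $t$ a scalar, $B^*=tA^*+(1-t)K$, and let $E'_0$ be the primitive idempotent of $B^*$ for the eigenvalue $\theta^*_0$. Then $U_0=E'_0V$.
   Context: $\mathcal K$ is an algebraically closed field; $V$ is a nonzero finite-dimensional vector space over $\mathcal K$; $q\in\mathcal K$ is nonzero and not a root of unity; $[3]_q=q^2+1+q^{-2}$. The $q$-Serre relations for $(X,Y)$: $X^3Y-[3]_qX^2YX+[3]_qXYX^2-YX^3=0$ and $Y^3X-[3]_qY^2XY+[3]_qYXY^2-XY^3=0$. Primitive idempotent of a diagonalizable $X$ for eigenvalue $\lambda_i$: $\prod_{j\ne i}\frac{X-\lambda_jI}{\lambda_i-\lambda_j}$. A tridiagonal system on $V$ is a sequence $(A;\{E_i\}_{i=0}^d;A^*;\{E^*_i\}_{i=0}^d)$ with $A,A^*$ diagonalizable, $\{E_i\}$, $\{E^*_i\}$ orderings of their primitive idempotents, $E_iA^*E_j=0$ and $E^*_iAE^*_j=0$ when $|i-j|>1$, and no subspaces other than $0,V$ invariant under both $A$ and $A^*$. Split decomposition: $U_i=(E^*_0V+\cdots+E^*_iV)\cap(E_iV+\cdots+E_dV)$;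 known: $V=U_0\oplus\cdots\oplus U_d$, $(A-\theta_iI)U_i\subseteq U_{i+1}$, $(A^*-\theta^*_iI)U_i\subseteq U_{i-1}$ ($U_{-1}=U_{d+1}=0$). It is a fact (proved in the paper) that $B^*$ is diagonalizable with eigenvalues $\theta^*_0,\dots,\theta^*_d$ and $\theta^*_i$-eigenspace of dimension $\dim U_i$. *)

theory Defs
  imports "HOL-Computational_Algebra.Polynomial" "Jordan_Normal_Form.Char_Poly"
begin

text \<open>V is modelled as the column space carrier_vec n (n = dim V), linear maps on V as
  n x n matrices over the field.\<close>

definition diagonalizable_mat :: "'a::field mat \<Rightarrow> bool" where
  "diagonalizable_mat X \<longleftrightarrow> (\<exists>D. similar_mat X D \<and> diagonal_mat D)"

definition subspace_vec :: "nat \<Rightarrow> 'a::field vec set \<Rightarrow> bool" where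
  "subspace_vec n W \<longleftrightarrow> W \<subseteq> carrier_vec n \<and> 0\<^sub>v n \<in> W \<and>
     (\<forall>u\<in>W. \<forall>w\<in>W. u + w \<in> W) \<and> (\<forall>c. \<forall>w\<in>W. c \<cdot>\<^sub>v w \<in> W)"

definition image_mat :: "'a::field mat \<Rightarrow> 'a vec set" where
  "image_mat X = {X *\<^sub>v v | v. v \<in> carrier_vec (dim_col X)}"

fun ssum :: "nat \<Rightarrow> 'a::field vec set list \<Rightarrow> 'a vec set" where
  "ssum n [] = {0\<^sub>v n}"
| "ssum n (W # Ws) = {w + u | w u. w \<in> W \<and> u \<in> ssum n Ws}"

definition mat_prod_list :: "nat \<Rightarrow> 'a::field mat list \<Rightarrow> 'a mat" where
  "mat_prod_list n Ms = foldr (*) Ms (1\<^sub>m n)"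

definition eigenvalues_of :: "'a::field mat \<Rightarrow> 'a set" where
  "eigenvalues_of X = {\<mu>. eigenvalue X \<mu>}"

text \<open>The factors commute, so the (arbitrary) order of the list is irrelevant.\<close>
definition prim_idem :: "'a::field mat \<Rightarrow> 'a \<Rightarrow> 'a mat" where
  "prim_idem X lam =
     (let ms = (SOME ms. distinct ms \<and> set ms = eigenvalues_of X - {lam})
      in mat_prod_list (dim_row X)
           (map (\<lambda>\<mu>. (1 / (lam - \<mu>)) \<cdot>\<^sub>m (X - \<mu> \<cdot>\<^sub>m 1\<^sub>m (dim_row X))) ms))"

definition q_int :: "'a::field \<Rightarrow> 'a" where
  "q_int q = q^2 + 1 + inverse q ^ 2"

definition q_serre :: "'a::field \<Rightarrow> 'a mat \<Rightarrow> 'a mat \<Rightarrow> bool" where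
  "q_serre q X Y \<longleftrightarrow>
     X*X*X*Y - q_int q \<cdot>\<^sub>m (X*X*Y*X) + q_int q \<cdot>\<^sub>m (X*Y*X*X) - Y*X*X*X = 0\<^sub>m (dim_row X) (dim_row X) \<and>
     Y*Y*Y*X - q_int q \<cdot>\<^sub>m (Y*Y*X*Y) + q_int q \<cdot>\<^sub>m (Y*X*Y*Y) - X*Y*Y*Y = 0\<^sub>m (dim_row X) (dim_row X)"

text \<open>Tridiagonal system (A; E_i; A*; E*_i) on K^n, where E_i is the primitive idempotent of A
  for th i and E*_i that of A* for ths i (i = 0..d).\<close>
definition tridiagonal_system ::
  "nat \<Rightarrow> nat \<Rightarrow> 'a::field mat \<Rightarrow> (nat \<Rightarrow> 'a) \<Rightarrow> 'a mat \<Rightarrow> (nat \<Rightarrow> 'a) \<Rightarrow> bool" where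
  "tridiagonal_system n d A th As ths \<longleftrightarrow>
     A \<in> carrier_mat n n \<and> As \<in> carrier_mat n n \<and>
     diagonalizable_mat A \<and> diagonalizable_mat As \<and>
     inj_on th {0..d} \<and> inj_on ths {0..d} \<and>
     eigenvalues_of A = th ` {0..d} \<and> eigenvalues_of As = ths ` {0..d} \<and>
     (\<forall>i\<le>d. \<forall>j\<le>d. (i > j + 1 \<or> j > i + 1) \<longrightarrow>
        prim_idem A (th i) * As * prim_idem A (th j) = 0\<^sub>m n n \<and>
        prim_idem As (ths i) * A * prim_idem As (ths j) = 0\<^sub>m n n) \<and>
     (\<forall>W. subspace_vec n W \<and> (\<forall>w\<in>W. A *\<^sub>v w \<in> W) \<and> (\<forall>w\<in>W. As *\<^sub>v w \<in> W)
          \<longrightarrow> W = {0\<^sub>v n} \<or> W = carrier_vec n)"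

definition split_comp ::
  "nat \<Rightarrow> nat \<Rightarrow> 'a::field mat \<Rightarrow> (nat \<Rightarrow> 'a) \<Rightarrow> 'a mat \<Rightarrow> (nat \<Rightarrow> 'a) \<Rightarrow> nat \<Rightarrow> 'a vec set" where
  "split_comp n d A th As ths i =
     ssum n (map (\<lambda>k. image_mat (prim_idem As (ths k))) [0..<i+1]) \<inter>
     ssum n (map (\<lambda>k. image_mat (prim_idem A (th k))) [i..<d+1])"

end

theory Submission
  imports Defs
begin



definition eig :: "nat \<Rightarrow> 'a::field mat \<Rightarrow> 'a \<Rightarrow> 'a vec set" where
  "eig n X mu = {v \<in> carrier_vec n. X *\<^sub>v v = mu \<cdot>\<^sub>v v}"

inductive_set ES :: "nat \<Rightarrow> 'a::field mat \<Rightarrow> 'a vec set" for n X where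
  ES0: "0\<^sub>v n \<in> ES n X"
| ESs: "x \<in> carrier_vec n \<Longrightarrow> X *\<^sub>v x = mu \<cdot>\<^sub>v x \<Longrightarrow> y \<in> ES n X \<Longrightarrow> x + y \<in> ES n X"

fun vsum :: "nat \<Rightarrow> ('b \<Rightarrow> 'a::field vec) \<Rightarrow> 'b list \<Rightarrow> 'a vec" where
  "vsum n y [] = 0\<^sub>v n"
| "vsum n y (i # is) = y i + vsum n y is"

lemma smult_mat_mult_vec:
  assumes "M \<in> carrier_mat nr nc" "v \<in> carrier_vec nc"
  shows "(c \<cdot>\<^sub>m M) *\<^sub>v v = c \<cdot>\<^sub>v (M *\<^sub>v v)"
  using assms by (intro eq_vecI) (auto simp: scalar_prod_def sum_distrib_left mult.assoc)

lemma vec_swap3: "(a :: 'a :: field vec) \<in> carrier_vec n \<Longrightarrow> b \<in> carrier_vec n \<Longrightarrow> c \<in> carrier_vec n \<Longrightarrow>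
  b + (a + c) = a + (b + c)"
  by (intro eq_vecI) auto

lemma vsum_carrier: "(\<And>i. i \<in> set xs \<Longrightarrow> y i \<in> carrier_vec n) \<Longrightarrow> vsum n y xs \<in> carrier_vec n"
  by (induction xs) auto

lemma vsum_append:
  assumes "\<And>i. i \<in> set (xs @ ys) \<Longrightarrow> y i \<in> carrier_vec n"
  shows "vsum n y (xs @ ys) = vsum n y xs + vsum n y ys"
  using assms
proof (induction xs)
  case Nil
  then show ?case using vsum_carrier[of ys y n] by simp
next
  case (Cons a xs)
  have c: "y a \<in> carrier_vec n" "vsum n y xs \<in> carrier_vec n" "vsum n y ys \<in> carrier_vec n"
    using Cons.prems by (auto intro!: vsum_carrier)
  then show ?case using Cons.IH Cons.prems by (simp add: assoc_add_vec[OF c])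
qed

lemma vsum_mult:
  assumes "M \<in> carrier_mat n n" "\<And>i. i \<in> set xs \<Longrightarrow> y i \<in> carrier_vec n"
  shows "M *\<^sub>v vsum n y xs = vsum n (\<lambda>i. M *\<^sub>v y i) xs"
  using assms
proof (induction xs)
  case Nil
  then show ?case by auto
next
  case (Cons a xs)
  then show ?case using vsum_carrier[of xs y n]
    by (simp add: mult_add_distrib_mat_vec[OF assms(1)])
qed

lemma vsum_cong: "(\<And>i. i \<in> set xs \<Longrightarrow> y i = z i) \<Longrightarrow> vsum n y xs = vsum n z xs"
  by (induction xs) auto

lemma vsum_zero: "(\<And>i. i \<in> set xs \<Longrightarrow> y i = 0\<^sub>v n) \<Longrightarrow> vsum n y xs = 0\<^sub>v n"
  by (induction xs) auto

lemma vsum_single: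
  assumes "distinct xs" "z \<in> carrier_vec n"
  shows "vsum n (\<lambda>l. if l = i then z else 0\<^sub>v n) xs = (if i \<in> set xs then z else 0\<^sub>v n)"
  using assms
proof (induction xs)
  case Nil
  then show ?case by simp
next
  case (Cons a xs)
  show ?case
  proof (cases "a = i")
    case True
    then have "vsum n (\<lambda>l. if l = i then z else 0\<^sub>v n) xs = 0\<^sub>v n"
      using Cons.prems by (intro vsum_zero) auto
    then show ?thesis using True Cons.prems by simp
  next
    case False
    then show ?thesis using Cons by auto
  qed
qed

lemma vsum_upd:
  assumes "distinct xs" "l \<in> set xs" "x \<in> carrier_vec n" "\<And>i. i \<in> set xs \<Longrightarrow> y i \<in> carrier_vec n"
  shows "vsum n (y(l := x + y l)) xs = x + vsum n y xs"
  using assms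
proof (induction xs)
  case Nil
  then show ?case by simp
next
  case (Cons a xs)
  show ?case
  proof (cases "a = l")
    case True
    then have "vsum n (y(l := x + y l)) xs = vsum n y xs"
      using Cons.prems by (intro vsum_cong) auto
    have c: "y a \<in> carrier_vec n" "vsum n y xs \<in> carrier_vec n"
      using Cons.prems by (auto intro!: vsum_carrier)
    have e1: "(y(l := x + y l)) a = x + y l" using True by simp
    have "vsum n (y(l := x + y l)) (a # xs) = (x + y l) + vsum n y xs"
      by (simp only: vsum.simps e1 \<open>vsum n (y(l := x + y l)) xs = vsum n y xs\<close>)
    moreover have "x + vsum n y (a # xs) = (x + y l) + vsum n y xs"
      using True c Cons.prems(3) by (simp add: assoc_add_vec[OF Cons.prems(3)])
    ultimately show ?thesis by (simp only:)
  next
    case False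
    have "vsum n (y(l := x + y l)) xs = x + vsum n y xs" by (rule Cons.IH) (use Cons.prems False in auto)
    have c: "y a \<in> carrier_vec n" "vsum n y xs \<in> carrier_vec n"
      using Cons.prems by (auto intro!: vsum_carrier)
    have e1: "(y(l := x + y l)) a = y a" using False by simp
    have "vsum n (y(l := x + y l)) (a # xs) = y a + (x + vsum n y xs)"
      by (simp only: vsum.simps e1 \<open>vsum n (y(l := x + y l)) xs = x + vsum n y xs\<close>)
    moreover have "y a + (x + vsum n y xs) = x + (y a + vsum n y xs)"
      by (rule vec_swap3[OF Cons.prems(3) c(1) c(2)])
    ultimately have "vsum n (y(l := x + y l)) (a # xs) = x + (y a + vsum n y xs)" by (rule trans)
    then show ?thesis by (simp only: vsum.simps)
  qed
qed

lemma subspace_carrier: "subspace_vec n W \<Longrightarrow> W \<subseteq> carrier_vec n"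
  by (simp add: subspace_vec_def)
lemma subspace_zero: "subspace_vec n W \<Longrightarrow> 0\<^sub>v n \<in> W"
  by (simp add: subspace_vec_def)
lemma subspace_add: "subspace_vec n W \<Longrightarrow> u \<in> W \<Longrightarrow> w \<in> W \<Longrightarrow> u + w \<in> W"
  by (simp add: subspace_vec_def)
lemma subspace_smult: "subspace_vec n W \<Longrightarrow> w \<in> W \<Longrightarrow> c \<cdot>\<^sub>v w \<in> W"
  by (simp add: subspace_vec_def)
lemma subspace_uminus: "subspace_vec n W \<Longrightarrow> w \<in> W \<Longrightarrow> - w \<in> W"
proof -
  assume W: "subspace_vec n W" and w: "w \<in> W"
  then have "w \<in> carrier_vec n" using subspace_carrier by blast
  then have "- w = (-1) \<cdot>\<^sub>v w" by (intro eq_vecI) auto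
  then show ?thesis using subspace_smult[OF W w] by simp
qed
lemma subspace_minus: "subspace_vec n W \<Longrightarrow> u \<in> W \<Longrightarrow> w \<in> W \<Longrightarrow> u - w \<in> W"
proof -
  assume W: "subspace_vec n W" and u: "u \<in> W" and w: "w \<in> W"
  then have "u \<in> carrier_vec n" "w \<in> carrier_vec n" using subspace_carrier by blast+
  then have "u - w = u + (- w)" by (intro eq_vecI) auto
  then show ?thesis using subspace_add[OF W u subspace_uminus[OF W w]] by simp
qed

lemma vsum_in_subspace:
  "subspace_vec n Z \<Longrightarrow> (\<And>i. i \<in> set xs \<Longrightarrow> y i \<in> Z) \<Longrightarrow> vsum n y xs \<in> Z"
  by (induction xs) (auto intro: subspace_add subspace_zero)

lemma subspace_inter: "subspace_vec n W \<Longrightarrow> subspace_vec n Z \<Longrightarrow> subspace_vec n (W \<inter> Z)"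
  by (auto simp: subspace_vec_def)

lemma subspace_eig: "X \<in> carrier_mat n n \<Longrightarrow> subspace_vec n (eig n X mu)"
  unfolding subspace_vec_def eig_def
  by (auto simp: mult_add_distrib_mat_vec mult_mat_vec smult_add_distrib_vec)

lemma subspace_zero_set: "subspace_vec n {0\<^sub>v n}"
  by (auto simp: subspace_vec_def)

lemma subspace_carrier_vec: "subspace_vec n (carrier_vec n)"
  by (auto simp: subspace_vec_def)

lemma ssum_char:
  assumes "distinct xs"
  shows "ssum n (map W xs) = {vsum n y xs | y. \<forall>i\<in>set xs. y i \<in> W i}"
  using assms
proof (induction xs)
  case Nil
  then show ?case by simp
next
  case (Cons a xs)
  show ?case
  proof (intro equalityI subsetI)
    fix v assume "v \<in> ssum n (map W (a # xs))"
    then obtain w u where v: "v = w + u" "w \<in> W a" "u \<in> ssum n (map W xs)" by auto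
    then obtain y where y: "u = vsum n y xs" "\<forall>i\<in>set xs. y i \<in> W i" using Cons by auto
    let ?y = "y(a := w)"
    have "vsum n ?y xs = vsum n y xs" using Cons.prems by (intro vsum_cong) auto
    then have "v = vsum n ?y (a # xs)" using v y by simp
    moreover have "\<forall>i\<in>set (a # xs). ?y i \<in> W i" using y v by auto
    ultimately show "v \<in> {vsum n y (a # xs) | y. \<forall>i\<in>set (a # xs). y i \<in> W i}" by blast
  next
    fix v assume "v \<in> {vsum n y (a # xs) | y. \<forall>i\<in>set (a # xs). y i \<in> W i}"
    then obtain y where "v = vsum n y (a # xs)" "\<forall>i\<in>set (a # xs). y i \<in> W i" by blast
    then show "v \<in> ssum n (map W (a # xs))" using Cons by auto
  qed
qed

lemma ssum_subspace:
  assumes "distinct xs" "\<And>i. i \<in> set xs \<Longrightarrow> subspace_vec n (W i)"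
  shows "subspace_vec n (ssum n (map W xs))"
proof -
  have car: "\<And>i. i \<in> set xs \<Longrightarrow> W i \<subseteq> carrier_vec n" using assms subspace_carrier by blast
  show ?thesis
    unfolding subspace_vec_def ssum_char[OF assms(1)]
  proof (intro conjI ballI allI)
    show "{vsum n y xs |y. \<forall>i\<in>set xs. y i \<in> W i} \<subseteq> carrier_vec n"
      using car by (auto intro!: vsum_carrier)
    show "0\<^sub>v n \<in> {vsum n y xs |y. \<forall>i\<in>set xs. y i \<in> W i}"
      using assms(2) subspace_zero
      by (intro CollectI exI[of _ "\<lambda>_. 0\<^sub>v n"]) (auto simp: vsum_zero)
  next
    fix u w assume "u \<in> {vsum n y xs |y. \<forall>i\<in>set xs. y i \<in> W i}" "w \<in> {vsum n y xs |y. \<forall>i\<in>set xs. y i \<in> W i}"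
    then obtain y z where u: "u = vsum n y xs" "\<forall>i\<in>set xs. y i \<in> W i"
      and w: "w = vsum n z xs" "\<forall>i\<in>set xs. z i \<in> W i" by blast
    have "vsum n (\<lambda>i. y i + z i) xs = u + w" unfolding u w using u(2) w(2) car
    proof (induction xs)
      case Nil then show ?case by simp
    next
      case (Cons a xs)
      have c: "y a \<in> carrier_vec n" "z a \<in> carrier_vec n" "vsum n y xs \<in> carrier_vec n" "vsum n z xs \<in> carrier_vec n"
        using Cons.prems by (auto intro!: vsum_carrier)
      have "vsum n (\<lambda>i. y i + z i) xs = vsum n y xs + vsum n z xs" using Cons by auto
      then show ?case using c by (simp, intro eq_vecI, auto)
    qed
    moreover have "\<forall>i\<in>set xs. y i + z i \<in> W i" using u(2) w(2) assms(2) by (auto intro: subspace_add)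
    ultimately show "u + w \<in> {vsum n y xs |y. \<forall>i\<in>set xs. y i \<in> W i}" by (intro CollectI exI[of _ "\<lambda>i. y i + z i"]) simp
  next
    fix c w assume "w \<in> {vsum n y xs |y. \<forall>i\<in>set xs. y i \<in> W i}"
    then obtain z where w: "w = vsum n z xs" "\<forall>i\<in>set xs. z i \<in> W i" by blast
    have "vsum n (\<lambda>i. c \<cdot>\<^sub>v z i) xs = c \<cdot>\<^sub>v w" unfolding w using w(2) car
    proof (induction xs)
      case Nil then show ?case by (auto intro!: eq_vecI)
    next
      case (Cons a xs)
      have c: "z a \<in> carrier_vec n" "vsum n z xs \<in> carrier_vec n"
        using Cons.prems by (auto intro!: vsum_carrier)
      have "vsum n (\<lambda>i. c \<cdot>\<^sub>v z i) xs = c \<cdot>\<^sub>v vsum n z xs" using Cons by auto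
      then show ?case using c by (simp add: smult_add_distrib_vec)
    qed
    moreover have "\<forall>i\<in>set xs. c \<cdot>\<^sub>v z i \<in> W i" using w(2) assms(2) by (auto intro: subspace_smult)
    ultimately show "c \<cdot>\<^sub>v w \<in> {vsum n y xs |y. \<forall>i\<in>set xs. y i \<in> W i}" by (intro CollectI exI[of _ "\<lambda>i. c \<cdot>\<^sub>v z i"]) simp
  qed
qed

lemma subset_ssum:
  assumes "distinct xs" "\<And>i. i \<in> set xs \<Longrightarrow> subspace_vec n (W i)" "j \<in> set xs"
  shows "W j \<subseteq> ssum n (map W xs)"
proof
  fix x assume x: "x \<in> W j"
  then have xc: "x \<in> carrier_vec n" using assms subspace_carrier by blast
  let ?y = "\<lambda>l. if l = j then x else 0\<^sub>v n"
  have "vsum n ?y xs = x" using vsum_single[OF assms(1) xc] assms(3) by simp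
  moreover have "\<forall>i\<in>set xs. ?y i \<in> W i" using x assms(2) subspace_zero by auto
  ultimately show "x \<in> ssum n (map W xs)" unfolding ssum_char[OF assms(1)]
    by (intro CollectI exI[of _ ?y]) simp
qed




lemma mat_mult_zero_vec: "M \<in> carrier_mat nr nc \<Longrightarrow> M *\<^sub>v 0\<^sub>v nc = 0\<^sub>v nr"
  by (intro eq_vecI) auto

lemma mat_prod_list_carrier:
  "(\<And>M. M \<in> set Ms \<Longrightarrow> M \<in> carrier_mat n n) \<Longrightarrow> mat_prod_list n Ms \<in> carrier_mat n n"
  unfolding mat_prod_list_def by (induction Ms) (auto intro!: mult_carrier_mat)

lemma prim_idem_carrier:
  assumes "X \<in> carrier_mat n n"
  shows "prim_idem X lam \<in> carrier_mat n n"
proof -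
  have dr: "dim_row X = n" using assms by simp
  show ?thesis unfolding prim_idem_def Let_def dr using assms
    by (intro mat_prod_list_carrier) auto
qed

lemma factor_action:
  assumes X: "(X :: 'a :: field mat) \<in> carrier_mat n n" and x: "x \<in> carrier_vec n" and ev: "X *\<^sub>v x = mu \<cdot>\<^sub>v x"
  shows "(c \<cdot>\<^sub>m (X - a \<cdot>\<^sub>m 1\<^sub>m n)) *\<^sub>v x = (c * (mu - a)) \<cdot>\<^sub>v x"
proof -
  have "(X - a \<cdot>\<^sub>m 1\<^sub>m n) *\<^sub>v x = X *\<^sub>v x - (a \<cdot>\<^sub>m 1\<^sub>m n) *\<^sub>v x"
    using X x by (intro minus_mult_distrib_mat_vec) auto
  also have "(a \<cdot>\<^sub>m 1\<^sub>m n) *\<^sub>v x = a \<cdot>\<^sub>v x"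
    using x by (simp add: smult_mat_mult_vec[of "1\<^sub>m n" n n])
  finally have "(X - a \<cdot>\<^sub>m 1\<^sub>m n) *\<^sub>v x = (mu - a) \<cdot>\<^sub>v x"
    using ev x by (auto intro!: eq_vecI simp: algebra_simps)
  then show ?thesis using X x
    by (subst smult_mat_mult_vec[of _ n n]) (auto intro!: eq_vecI)
qed

lemma prod_action:
  assumes X: "(X :: 'a :: field mat) \<in> carrier_mat n n" and x: "x \<in> carrier_vec n" and ev: "X *\<^sub>v x = mu \<cdot>\<^sub>v x"
  shows "mat_prod_list n (map (\<lambda>nu. c nu \<cdot>\<^sub>m (X - nu \<cdot>\<^sub>m 1\<^sub>m n)) ms) *\<^sub>v x
         = (\<Prod>nu\<leftarrow>ms. c nu * (mu - nu)) \<cdot>\<^sub>v x"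
proof (induction ms)
  case Nil
  then show ?case using x by (simp add: mat_prod_list_def)
next
  case (Cons a ms)
  let ?R = "mat_prod_list n (map (\<lambda>nu. c nu \<cdot>\<^sub>m (X - nu \<cdot>\<^sub>m 1\<^sub>m n)) ms)"
  have R: "?R \<in> carrier_mat n n" using X by (intro mat_prod_list_carrier) auto
  have F: "c a \<cdot>\<^sub>m (X - a \<cdot>\<^sub>m 1\<^sub>m n) \<in> carrier_mat n n" using X by auto
  have "mat_prod_list n (map (\<lambda>nu. c nu \<cdot>\<^sub>m (X - nu \<cdot>\<^sub>m 1\<^sub>m n)) (a # ms))
        = (c a \<cdot>\<^sub>m (X - a \<cdot>\<^sub>m 1\<^sub>m n)) * ?R" by (simp add: mat_prod_list_def)
  then have "mat_prod_list n (map (\<lambda>nu. c nu \<cdot>\<^sub>m (X - nu \<cdot>\<^sub>m 1\<^sub>m n)) (a # ms)) *\<^sub>v x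
        = (c a \<cdot>\<^sub>m (X - a \<cdot>\<^sub>m 1\<^sub>m n)) *\<^sub>v (?R *\<^sub>v x)" using F R x by simp
  also have "\<dots> = (\<Prod>nu\<leftarrow>ms. c nu * (mu - nu)) \<cdot>\<^sub>v ((c a \<cdot>\<^sub>m (X - a \<cdot>\<^sub>m 1\<^sub>m n)) *\<^sub>v x)"
    unfolding Cons using F x by (rule mult_mat_vec)
  also have "\<dots> = (\<Prod>nu\<leftarrow>a # ms. c nu * (mu - nu)) \<cdot>\<^sub>v x"
    unfolding factor_action[OF X x ev] using x by (auto intro!: eq_vecI)
  finally show ?case .
qed

lemma finite_eigenvalues:
  assumes X: "(X :: 'a :: field mat) \<in> carrier_mat n n"
  shows "finite (eigenvalues_of X)"
proof -
  have "char_poly X \<noteq> 0" using degree_monic_char_poly[OF X] by auto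
  then have "finite {k. poly (char_poly X) k = 0}" by (rule poly_roots_finite)
  moreover have "eigenvalues_of X \<subseteq> {k. poly (char_poly X) k = 0}"
    unfolding eigenvalues_of_def using eigenvalue_root_char_poly[OF X] by auto
  ultimately show ?thesis by (rule finite_subset[rotated])
qed

lemma prod_list_ones: "(\<And>x. x \<in> set xs \<Longrightarrow> f x = (1::'a::comm_monoid_mult)) \<Longrightarrow> (\<Prod>x\<leftarrow>xs. f x) = 1"
  by (induction xs) auto

lemma prim_idem_action:
  assumes X: "(X :: 'a :: field mat) \<in> carrier_mat n n" and x: "x \<in> carrier_vec n" and ev: "X *\<^sub>v x = mu \<cdot>\<^sub>v x"
  shows "prim_idem X lam *\<^sub>v x = (if mu = lam then x else 0\<^sub>v n)"
proof -
  have fin: "finite (eigenvalues_of X)" using finite_eigenvalues[OF X] .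
  define ms where "ms = (SOME ms. distinct ms \<and> set ms = eigenvalues_of X - {lam})"
  have "\<exists>ms. distinct ms \<and> set ms = eigenvalues_of X - {lam}"
    using finite_distinct_list[of "eigenvalues_of X - {lam}"] fin by auto
  then have ms: "distinct ms" "set ms = eigenvalues_of X - {lam}"
    unfolding ms_def by (metis (mono_tags, lifting) someI_ex)+
  have dr: "dim_row X = n" using X by simp
  have P: "prim_idem X lam = mat_prod_list n (map (\<lambda>nu. (1 / (lam - nu)) \<cdot>\<^sub>m (X - nu \<cdot>\<^sub>m 1\<^sub>m n)) ms)"
    unfolding prim_idem_def Let_def dr ms_def by simp
  have act: "prim_idem X lam *\<^sub>v x = (\<Prod>nu\<leftarrow>ms. 1 / (lam - nu) * (mu - nu)) \<cdot>\<^sub>v x"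
    unfolding P by (rule prod_action[OF X x ev])
  show ?thesis
  proof (cases "mu = lam")
    case True
    have "(\<Prod>nu\<leftarrow>ms. 1 / (lam - nu) * (mu - nu)) = 1"
      using ms True by (intro prod_list_ones) auto
    then show ?thesis using act True x by simp
  next
    case False
    show ?thesis
    proof (cases "x = 0\<^sub>v n")
      case True
      then show ?thesis using act by (auto intro!: eq_vecI)
    next
      case xnz: False
      have "eigenvalue X mu" unfolding eigenvalue_def eigenvector_def using x xnz ev dr by auto
      then have "mu \<in> set ms" using ms False unfolding eigenvalues_of_def by auto
      then have "(\<Prod>nu\<leftarrow>ms. 1 / (lam - nu) * (mu - nu)) = 0"
        by (auto simp: prod_list_zero_iff)
      then show ?thesis using act False x by (auto intro!: eq_vecI)
    qed
  qed
qed

lemma ES_carrier: "v \<in> ES n X \<Longrightarrow> v \<in> carrier_vec n"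
  by (induction rule: ES.induct) auto

lemma image_prim_idem:
  assumes X: "X \<in> carrier_mat n n" and sp: "\<And>v. v \<in> carrier_vec n \<Longrightarrow> v \<in> ES n X"
  shows "image_mat (prim_idem X lam) = eig n X lam"
proof -
  have P: "prim_idem X lam \<in> carrier_mat n n" by (rule prim_idem_carrier[OF X])
  have sub: "subspace_vec n (eig n X lam)" by (rule subspace_eig[OF X])
  have "prim_idem X lam *\<^sub>v v \<in> eig n X lam" if "v \<in> ES n X" for v
    using that
  proof (induction rule: ES.induct)
    case ES0
    have "prim_idem X lam *\<^sub>v 0\<^sub>v n = 0\<^sub>v n" using P by (intro eq_vecI) auto
    then show ?case using subspace_zero[OF sub] by simp
  next
    case (ESs x mu y)
    have yc: "y \<in> carrier_vec n" using ESs ES_carrier by blast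
    have "prim_idem X lam *\<^sub>v (x + y) = prim_idem X lam *\<^sub>v x + prim_idem X lam *\<^sub>v y"
      using P ESs yc by (intro mult_add_distrib_mat_vec) auto
    moreover have "prim_idem X lam *\<^sub>v x \<in> eig n X lam"
      unfolding prim_idem_action[OF X ESs(1) ESs(2)]
      using ESs subspace_zero[OF sub] by (auto simp: eig_def)
    ultimately show ?case using ESs subspace_add[OF sub] by simp
  qed
  then have 1: "image_mat (prim_idem X lam) \<subseteq> eig n X lam"
    unfolding image_mat_def using P sp by auto
  have 2: "eig n X lam \<subseteq> image_mat (prim_idem X lam)"
  proof
    fix x assume x: "x \<in> eig n X lam"
    then have xc: "x \<in> carrier_vec n" and ev: "X *\<^sub>v x = lam \<cdot>\<^sub>v x" by (auto simp: eig_def)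
    have "prim_idem X lam *\<^sub>v x = x" using prim_idem_action[OF X xc ev] by simp
    then show "x \<in> image_mat (prim_idem X lam)" unfolding image_mat_def using P xc
      by (intro CollectI exI[of _ x]) auto
  qed
  show ?thesis using 1 2 by blast
qed

lemma ES_add: "u \<in> ES n X \<Longrightarrow> w \<in> ES n X \<Longrightarrow> u + w \<in> ES n X"
proof (induction rule: ES.induct)
  case ES0
  have "0\<^sub>v n + w = w" using ES0 ES_carrier[of w] by (intro left_zero_vec) auto
  then show ?case using ES0 by simp
next
  case (ESs x mu y)
  have "x + y + w = x + (y + w)" using ESs ES_carrier by (intro assoc_add_vec) auto
  then show ?case using ESs ES.ESs by metis
qed

lemma ES_eigvec: "x \<in> carrier_vec n \<Longrightarrow> X *\<^sub>v x = mu \<cdot>\<^sub>v x \<Longrightarrow> x \<in> ES n X"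
  using ES.ESs[OF _ _ ES.ES0, of x n X mu] by simp

lemma diag_ES:
  assumes X: "X \<in> carrier_mat n n" and dg: "diagonalizable_mat X" and v: "v \<in> carrier_vec n"
  shows "v \<in> ES n X"
proof -
  obtain D where "similar_mat X D" "diagonal_mat D" using dg unfolding diagonalizable_mat_def by blast
  then obtain P Q where w: "similar_mat_wit X D P Q" unfolding similar_mat_def by blast
  have dr: "dim_row X = n" using X by simp
  from w have c: "D \<in> carrier_mat n n" "P \<in> carrier_mat n n" "Q \<in> carrier_mat n n"
    and PQ: "P * Q = 1\<^sub>m n" and QP: "Q * P = 1\<^sub>m n" and XD: "X = P * D * Q"
    unfolding similar_mat_wit_def Let_def dr by auto
  have dg2: "\<And>i j. i < n \<Longrightarrow> j < n \<Longrightarrow> i \<noteq> j \<Longrightarrow> D $$ (i,j) = 0"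
    using \<open>diagonal_mat D\<close> c unfolding diagonal_mat_def by auto
  have eigm: "P *\<^sub>v unit_vec n m \<in> ES n X" if m: "m < n" for m
  proof -
    have De: "D *\<^sub>v unit_vec n m = D $$ (m,m) \<cdot>\<^sub>v unit_vec n m"
      using c m dg2 by (intro eq_vecI) auto
    have "Q *\<^sub>v (P *\<^sub>v unit_vec n m) = unit_vec n m"
      using c QP by (simp add: assoc_mult_mat_vec[symmetric])
    have "X *\<^sub>v (P *\<^sub>v unit_vec n m) = (P * D) *\<^sub>v (Q *\<^sub>v (P *\<^sub>v unit_vec n m))"
      unfolding XD by (rule assoc_mult_mat_vec) (use c in auto)
    also have "\<dots> = P *\<^sub>v (D *\<^sub>v (Q *\<^sub>v (P *\<^sub>v unit_vec n m)))"
      by (rule assoc_mult_mat_vec) (use c in auto)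
    finally have "X *\<^sub>v (P *\<^sub>v unit_vec n m) = P *\<^sub>v (D *\<^sub>v unit_vec n m)"
      using \<open>Q *\<^sub>v (P *\<^sub>v unit_vec n m) = unit_vec n m\<close> by simp
    also have "\<dots> = D $$ (m,m) \<cdot>\<^sub>v (P *\<^sub>v unit_vec n m)"
      unfolding De using c by (intro mult_mat_vec) auto
    finally show ?thesis using c by (intro ES_eigvec) auto
  qed
  have smul: "c' \<cdot>\<^sub>v u \<in> ES n X" if "u \<in> ES n X" for u c'
    using that
  proof (induction rule: ES.induct)
    case ES0
    have "c' \<cdot>\<^sub>v 0\<^sub>v n = 0\<^sub>v n" by (intro eq_vecI) auto
    then show ?case using ES.ES0 by simp
  next
    case (ESs x mu y)
    have "c' \<cdot>\<^sub>v (x + y) = c' \<cdot>\<^sub>v x + c' \<cdot>\<^sub>v y" using ESs ES_carrier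
      by (intro smult_add_distrib_vec) auto
    moreover have "X *\<^sub>v (c' \<cdot>\<^sub>v x) = mu \<cdot>\<^sub>v (c' \<cdot>\<^sub>v x)"
      using ESs X by (auto simp: mult_mat_vec intro!: eq_vecI)
    ultimately show ?case using ESs ES.ESs[of "c' \<cdot>\<^sub>v x" n X mu "c' \<cdot>\<^sub>v y"] by auto
  qed
  have step: "P *\<^sub>v vec n (\<lambda>i. if i < m then u $ i else 0) \<in> ES n X" if "m \<le> n" for m u
    using that
  proof (induction m)
    case 0
    have "vec n (\<lambda>i. if i < 0 then u $ i else 0) = 0\<^sub>v n" by (intro eq_vecI) auto
    then show ?case using c ES.ES0 mat_mult_zero_vec[of P n n] by simp
  next
    case (Suc m)
    have e: "vec n (\<lambda>i. if i < Suc m then u $ i else 0)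
       = vec n (\<lambda>i. if i < m then u $ i else 0) + u $ m \<cdot>\<^sub>v unit_vec n m"
      using Suc by (intro eq_vecI) (auto simp: unit_vec_def less_Suc_eq)
    have "P *\<^sub>v vec n (\<lambda>i. if i < Suc m then u $ i else 0)
       = P *\<^sub>v vec n (\<lambda>i. if i < m then u $ i else 0) + u $ m \<cdot>\<^sub>v (P *\<^sub>v unit_vec n m)"
      unfolding e using c by (simp add: mult_add_distrib_mat_vec mult_mat_vec)
    moreover have "u $ m \<cdot>\<^sub>v (P *\<^sub>v unit_vec n m) \<in> ES n X"
      using Suc.prems by (intro smul eigm) simp
    ultimately show ?case using Suc by (simp add: ES_add)
  qed
  have "vec n (\<lambda>i. if i < n then (Q *\<^sub>v v) $ i else 0) = Q *\<^sub>v v"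
    using c v by (intro eq_vecI) auto
  moreover have "P *\<^sub>v (Q *\<^sub>v v) = v" using c v PQ by (simp add: assoc_mult_mat_vec[symmetric])
  ultimately show ?thesis using step[of n "Q *\<^sub>v v"] by simp
qed




declare upt_Suc[simp del]

lemma ES_vsum:
  assumes X: "(X :: 'a :: field mat) \<in> carrier_mat n n" and evs: "eigenvalues_of X = f ` {0..d}"
    and v: "v \<in> ES n X"
  shows "\<exists>y. (\<forall>l\<le>d. y l \<in> eig n X (f l)) \<and> v = vsum n y [0..<d+1]"
  using v
proof (induction rule: ES.induct)
  case ES0
  have "vsum n (\<lambda>_. 0\<^sub>v n) [0..<d+1] = (0\<^sub>v n :: 'a vec)" by (rule vsum_zero) simp
  moreover have "\<forall>l\<le>d. 0\<^sub>v n \<in> eig n X (f l)" using subspace_zero[OF subspace_eig[OF X]] by blast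
  ultimately show ?case by (intro exI[of _ "\<lambda>_. 0\<^sub>v n"]) simp
next
  case (ESs x mu v')
  then obtain y where y: "\<forall>l\<le>d. y l \<in> eig n X (f l)" "v' = vsum n y [0..<d+1]" by blast
  have yc: "\<And>l. l \<in> set [0..<d+1] \<Longrightarrow> y l \<in> carrier_vec n" using y(1) by (auto simp: eig_def)
  have v'c: "v' \<in> carrier_vec n" using ESs ES_carrier by blast
  show ?case
  proof (cases "x = 0\<^sub>v n")
    case True
    then have "x + v' = v'" using v'c by simp
    then show ?thesis using y by metis
  next
    case False
    have "eigenvalue X mu" unfolding eigenvalue_def eigenvector_def using ESs False X by auto
    then have "mu \<in> f ` {0..d}" using evs unfolding eigenvalues_of_def by blast
    then obtain l where l: "l \<le> d" "mu = f l" by auto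
    let ?y = "y(l := x + y l)"
    have "vsum n ?y [0..<d+1] = x + vsum n y [0..<d+1]"
      using l ESs yc by (intro vsum_upd) auto
    moreover have "\<forall>k\<le>d. ?y k \<in> eig n X (f k)"
    proof (intro allI impI)
      fix k assume k: "k \<le> d"
      have "x \<in> eig n X (f l)" using ESs l by (auto simp: eig_def)
      then show "?y k \<in> eig n X (f k)"
        using y(1) k l subspace_add[OF subspace_eig[OF X]] by auto
    qed
    ultimately show ?thesis using y(2) by metis
  qed
qed

lemma vsum_restrict:
  assumes ab: "a \<le> b" "b \<le> m" and yz: "\<And>l. l < m \<Longrightarrow> (l < a \<or> b \<le> l) \<Longrightarrow> y l = 0\<^sub>v n"
    and yc: "\<And>l. l < m \<Longrightarrow> y l \<in> carrier_vec n"
  shows "vsum n y [0..<m] = vsum n y [a..<b]"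
proof -
  have e1: "[0..<m] = [0..<a] @ [a..<m]" using upt_add_eq_append[of 0 a "m - a"] ab by simp
  have e2: "[a..<m] = [a..<b] @ [b..<m]" using upt_add_eq_append[of a b "m - b"] ab by simp
  have z1: "vsum n y [0..<a] = 0\<^sub>v n" using yz ab by (intro vsum_zero) auto
  have z2: "vsum n y [b..<m] = 0\<^sub>v n" using yz ab by (intro vsum_zero) auto
  have c: "vsum n y [a..<b] \<in> carrier_vec n" using yc ab by (intro vsum_carrier) auto
  have s1: "vsum n y ([0..<a] @ ([a..<b] @ [b..<m])) = vsum n y [0..<a] + vsum n y ([a..<b] @ [b..<m])"
    by (rule vsum_append) (use yc ab in auto)
  have s2: "vsum n y ([a..<b] @ [b..<m]) = vsum n y [a..<b] + vsum n y [b..<m]"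
    by (rule vsum_append) (use yc ab in auto)
  have "vsum n y [0..<m] = vsum n y [0..<a] + (vsum n y [a..<b] + vsum n y [b..<m])"
    unfolding e1 e2 s1 s2 by (rule refl)
  then show ?thesis using z1 z2 c by simp
qed

lemma tri_vsum:
  assumes X: "(X :: 'a :: field mat) \<in> carrier_mat n n" and Y: "Y \<in> carrier_mat n n"
    and sp: "\<And>v. v \<in> carrier_vec n \<Longrightarrow> v \<in> ES n X"
    and evs: "eigenvalues_of X = f ` {0..d}" and inj: "inj_on f {0..d}"
    and tri: "\<forall>i\<le>d. \<forall>j\<le>d. (i > j + 1 \<or> j > i + 1) \<longrightarrow>
        prim_idem X (f i) * Y * prim_idem X (f j) = 0\<^sub>m n n"
    and j: "j \<le> d" and x: "x \<in> eig n X (f j)"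
  shows "\<exists>y. (\<forall>l\<le>d. y l \<in> eig n X (f l)) \<and> (\<forall>l\<le>d. (l + 1 < j \<or> j + 1 < l) \<longrightarrow> y l = 0\<^sub>v n)
            \<and> Y *\<^sub>v x = vsum n y [0..<d+1]"
proof -
  have xc: "x \<in> carrier_vec n" and xe: "X *\<^sub>v x = f j \<cdot>\<^sub>v x" using x by (auto simp: eig_def)
  have Yx: "Y *\<^sub>v x \<in> carrier_vec n" using Y xc by simp
  obtain y where y: "\<forall>l\<le>d. y l \<in> eig n X (f l)" "Y *\<^sub>v x = vsum n y [0..<d+1]"
    using ES_vsum[OF X evs sp[OF Yx]] by blast
  have yc: "\<And>l. l \<in> set [0..<d+1] \<Longrightarrow> y l \<in> carrier_vec n" using y(1) by (auto simp: eig_def)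
  have far: "y l = 0\<^sub>v n" if l: "l \<le> d" "l + 1 < j \<or> j + 1 < l" for l
  proof -
    let ?E = "\<lambda>k. prim_idem X (f k)"
    have Ec: "\<And>k. ?E k \<in> carrier_mat n n" using prim_idem_carrier[OF X] by blast
    have "?E l *\<^sub>v (Y *\<^sub>v x) = vsum n (\<lambda>i. ?E l *\<^sub>v y i) [0..<d+1]"
      unfolding y(2) using Ec yc by (intro vsum_mult) auto
    also have "\<dots> = vsum n (\<lambda>i. if i = l then y l else 0\<^sub>v n) [0..<d+1]"
    proof (rule vsum_cong)
      fix i assume i: "i \<in> set [0..<d+1]"
      have ye: "y i \<in> carrier_vec n" "X *\<^sub>v y i = f i \<cdot>\<^sub>v y i" using y(1) i by (auto simp: eig_def)
      have "(f i = f l) = (i = l)" using inj i l unfolding inj_on_def by auto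
      then show "?E l *\<^sub>v y i = (if i = l then y l else 0\<^sub>v n)"
        unfolding prim_idem_action[OF X ye] by auto
    qed
    also have "\<dots> = y l" using vsum_single[of "[0..<d+1]" "y l" n l] yc l by auto
    finally have 1: "?E l *\<^sub>v (Y *\<^sub>v x) = y l" .
    have "?E j *\<^sub>v x = x" using prim_idem_action[OF X xc xe] by simp
    then have "?E l *\<^sub>v (Y *\<^sub>v x) = ?E l *\<^sub>v (Y *\<^sub>v (?E j *\<^sub>v x))" by simp
    also have "\<dots> = (?E l * Y) *\<^sub>v (?E j *\<^sub>v x)"
      by (rule assoc_mult_mat_vec[symmetric]) (use Ec[of j] Ec[of l] Y xc in auto)
    also have "\<dots> = (?E l * Y * ?E j) *\<^sub>v x"
      by (rule assoc_mult_mat_vec[symmetric]) (use Ec[of j] Ec[of l] Y xc in auto)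
    also have "?E l * Y * ?E j = 0\<^sub>m n n" using tri l j by auto
    finally show ?thesis using 1 xc by auto
  qed
  show ?thesis using y far by blast
qed




declare upt_Suc[simp del]

lemma eig_carrier: "x \<in> eig n X mu \<Longrightarrow> x \<in> carrier_vec n" by (simp add: eig_def)

lemma maps_vsum:
  assumes "M \<in> carrier_mat n n" "subspace_vec n Z" "\<And>i. i \<in> set xs \<Longrightarrow> y i \<in> carrier_vec n"
    "\<And>i. i \<in> set xs \<Longrightarrow> M *\<^sub>v y i \<in> Z"
  shows "M *\<^sub>v vsum n y xs \<in> Z"
proof -
  have "M *\<^sub>v vsum n y xs = vsum n (\<lambda>i. M *\<^sub>v y i) xs" by (rule vsum_mult) (use assms in auto)
  then show ?thesis using vsum_in_subspace[OF assms(2), of xs "\<lambda>i. M *\<^sub>v y i"] assms(4) by simp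
qed

lemma VL1: "(w :: 'a :: field vec) \<in> carrier_vec n \<Longrightarrow> u \<in> carrier_vec n \<Longrightarrow> a \<in> carrier_vec n \<Longrightarrow>
  (c \<cdot>\<^sub>v w + a) - c \<cdot>\<^sub>v (w + u) = a - c \<cdot>\<^sub>v u"
  by (intro eq_vecI) (auto simp: algebra_simps)
lemma VL2: "(w :: 'a :: field vec) \<in> carrier_vec n \<Longrightarrow> u \<in> carrier_vec n \<Longrightarrow> a \<in> carrier_vec n \<Longrightarrow>
  (a + c \<cdot>\<^sub>v u) - c \<cdot>\<^sub>v (w + u) = a - c \<cdot>\<^sub>v w"
  by (intro eq_vecI) (auto simp: algebra_simps)
lemma VL3: "(a :: 'a :: field vec) \<in> carrier_vec n \<Longrightarrow> b \<in> carrier_vec n \<Longrightarrow> a = b + (a - b)"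
  by (intro eq_vecI) auto

locale tsys =
  fixes n d :: nat and A As K :: "'a::field mat" and t :: 'a and th ths :: "nat \<Rightarrow> 'a"
  assumes A: "A \<in> carrier_mat n n" and As: "As \<in> carrier_mat n n" and Kc: "K \<in> carrier_mat n n"
    and spA: "\<And>v. v \<in> carrier_vec n \<Longrightarrow> v \<in> ES n A"
    and spAs: "\<And>v. v \<in> carrier_vec n \<Longrightarrow> v \<in> ES n As"
    and evA: "eigenvalues_of A = th ` {0..d}" and evAs: "eigenvalues_of As = ths ` {0..d}"
    and injA: "inj_on th {0..d}" and injAs: "inj_on ths {0..d}"
    and triA: "\<forall>i\<le>d. \<forall>j\<le>d. (i > j + 1 \<or> j > i + 1) \<longrightarrow>
        prim_idem As (ths i) * A * prim_idem As (ths j) = 0\<^sub>m n n"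
    and triAs: "\<forall>i\<le>d. \<forall>j\<le>d. (i > j + 1 \<or> j > i + 1) \<longrightarrow>
        prim_idem A (th i) * As * prim_idem A (th j) = 0\<^sub>m n n"
    and irr: "\<And>W. subspace_vec n W \<Longrightarrow> (\<forall>w\<in>W. A *\<^sub>v w \<in> W) \<Longrightarrow> (\<forall>w\<in>W. As *\<^sub>v w \<in> W)
        \<Longrightarrow> W = {0\<^sub>v n} \<or> W = carrier_vec n"
    and Khyp: "\<And>i u. i \<le> d \<Longrightarrow> u \<in> split_comp n d A th As ths i \<Longrightarrow> K *\<^sub>v u = ths i \<cdot>\<^sub>v u"
begin

definition "Ek k = eig n A (th k)"
definition "Es k = eig n As (ths k)"
definition "T k = ssum n (map Es [0..<k+1])"
definition "S j = ssum n (map Ek [j..<d+1])"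
definition "U i = T i \<inter> S i"
definition "Tl k = (if k = 0 then {0\<^sub>v n} else T (k - 1))"

lemma sub_Ek: "subspace_vec n (Ek k)" unfolding Ek_def by (rule subspace_eig[OF A])
lemma sub_Es: "subspace_vec n (Es k)" unfolding Es_def by (rule subspace_eig[OF As])
lemma sub_T: "subspace_vec n (T k)" unfolding T_def by (rule ssum_subspace) (auto simp: sub_Es)
lemma sub_S: "subspace_vec n (S k)" unfolding S_def by (rule ssum_subspace) (auto simp: sub_Ek)
lemma sub_U: "subspace_vec n (U k)" unfolding U_def by (intro subspace_inter sub_T sub_S)
lemma sub_Tl: "subspace_vec n (Tl k)" unfolding Tl_def by (auto simp: sub_T subspace_zero_set)

lemma Ek_c: "x \<in> Ek k \<Longrightarrow> x \<in> carrier_vec n" using sub_Ek subspace_carrier by blast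
lemma Es_c: "x \<in> Es k \<Longrightarrow> x \<in> carrier_vec n" using sub_Es subspace_carrier by blast
lemma T_c: "x \<in> T k \<Longrightarrow> x \<in> carrier_vec n" using sub_T subspace_carrier by blast
lemma S_c: "x \<in> S k \<Longrightarrow> x \<in> carrier_vec n" using sub_S subspace_carrier by blast
lemma U_c: "x \<in> U k \<Longrightarrow> x \<in> carrier_vec n" using sub_U subspace_carrier by blast
lemma Tl_c: "x \<in> Tl k \<Longrightarrow> x \<in> carrier_vec n" using sub_Tl subspace_carrier by blast

lemma T_char: "T k = {vsum n y [0..<k+1] | y. \<forall>i\<in>set [0..<k+1]. y i \<in> Es i}"
  unfolding T_def by (rule ssum_char) simp
lemma S_char: "S j = {vsum n y [j..<d+1] | y. \<forall>i\<in>set [j..<d+1]. y i \<in> Ek i}"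
  unfolding S_def by (rule ssum_char) simp

lemma Es_T: "l \<le> k \<Longrightarrow> Es l \<subseteq> T k"
  unfolding T_def by (rule subset_ssum) (auto simp: sub_Es)
lemma Ek_S: "j \<le> l \<Longrightarrow> l \<le> d \<Longrightarrow> Ek l \<subseteq> S j"
  unfolding S_def by (rule subset_ssum) (auto simp: sub_Ek)

lemma T_mono: assumes "i \<le> k" shows "T i \<subseteq> T k"
proof
  fix x assume "x \<in> T i"
  then obtain y where y: "x = vsum n y [0..<i+1]" "\<forall>l\<in>set [0..<i+1]. y l \<in> Es l"
    unfolding T_char by blast
  show "x \<in> T k" unfolding y(1)
  proof (rule vsum_in_subspace[OF sub_T])
    fix l assume l: "l \<in> set [0..<i+1]"
    then have "y l \<in> Es l" "l \<le> k" using y(2) assms by auto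
    then show "y l \<in> T k" using Es_T by blast
  qed
qed

lemma S_mono: assumes "j \<le> j'" shows "S j' \<subseteq> S j"
proof
  fix x assume "x \<in> S j'"
  then obtain y where y: "x = vsum n y [j'..<d+1]" "\<forall>l\<in>set [j'..<d+1]. y l \<in> Ek l"
    unfolding S_char by blast
  show "x \<in> S j" unfolding y(1)
  proof (rule vsum_in_subspace[OF sub_S])
    fix l assume l: "l \<in> set [j'..<d+1]"
    then have "y l \<in> Ek l" "j \<le> l" "l \<le> d" using y(2) assms by auto
    then show "y l \<in> S j" using Ek_S by blast
  qed
qed

lemma T_full: "T d = carrier_vec n"
proof
  show "T d \<subseteq> carrier_vec n" using T_c by blast
  show "carrier_vec n \<subseteq> T d"
  proof
    fix v :: "'a vec" assume "v \<in> carrier_vec n"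
    then obtain y where "\<forall>l\<le>d. y l \<in> eig n As (ths l)" "v = vsum n y [0..<d+1]"
      using ES_vsum[OF As evAs spAs] by blast
    then show "v \<in> T d" unfolding T_char Es_def by (intro CollectI exI[of _ y]) auto
  qed
qed

lemma S_full: "S 0 = carrier_vec n"
proof
  show "S 0 \<subseteq> carrier_vec n" using S_c by blast
  show "carrier_vec n \<subseteq> S 0"
  proof
    fix v :: "'a vec" assume "v \<in> carrier_vec n"
    then obtain y where "\<forall>l\<le>d. y l \<in> eig n A (th l)" "v = vsum n y [0..<d+1]"
      using ES_vsum[OF A evA spA] by blast
    then show "v \<in> S 0" unfolding S_char Ek_def by (intro CollectI exI[of _ y]) auto
  qed
qed

lemma S_top: "S (d+1) = {0\<^sub>v n}" unfolding S_def by simp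

lemma S_split: assumes "j \<le> d" shows "S j = {w + u | w u. w \<in> Ek j \<and> u \<in> S (j+1)}"
proof -
  have "[j..<d+1] = j # [j+1..<d+1]" using assms by (simp add: upt_conv_Cons)
  then show ?thesis unfolding S_def by simp
qed

lemma T0: "T 0 = Es 0"
proof -
  have "T 0 = {w + u | w u. w \<in> Es 0 \<and> u \<in> {0\<^sub>v n}}" unfolding T_def by (simp add: upt_Suc)
  also have "\<dots> = Es 0"
  proof (intro equalityI subsetI)
    fix x assume "x \<in> {w + u | w u. w \<in> Es 0 \<and> u \<in> {0\<^sub>v n}}"
    then obtain w where "w \<in> Es 0" "x = w + 0\<^sub>v n" by blast
    then show "x \<in> Es 0" using Es_c[of w 0] by simp
  next
    fix x assume x: "x \<in> Es 0"
    then have "x = x + 0\<^sub>v n" using Es_c[of x 0] by simp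
    then show "x \<in> {w + u | w u. w \<in> Es 0 \<and> u \<in> {0\<^sub>v n}}" using x by blast
  qed
  finally show ?thesis .
qed

lemma T_dec: assumes "v \<in> T (Suc k)" shows "\<exists>w u. w \<in> T k \<and> u \<in> Es (Suc k) \<and> v = w + u"
proof -
  obtain y where y: "v = vsum n y [0..<Suc k+1]" "\<forall>l\<in>set [0..<Suc k+1]. y l \<in> Es l"
    using assms unfolding T_char by blast
  have yc: "\<And>l. l \<in> set [0..<Suc k + 1] \<Longrightarrow> y l \<in> carrier_vec n" using y(2) Es_c by blast
  have e: "[0..<Suc k+1] = [0..<k+1] @ [Suc k]" by (simp add: upt_Suc)
  have "v = vsum n y [0..<k+1] + vsum n y [Suc k]" unfolding y(1) e
    by (rule vsum_append) (use yc e in auto)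
  moreover have "vsum n y [Suc k] = y (Suc k)" using yc by simp
  moreover have "vsum n y [0..<k+1] \<in> T k" unfolding T_char using y(2)
    by (intro CollectI exI[of _ y]) auto
  moreover have "y (Suc k) \<in> Es (Suc k)" using y(2) by simp
  ultimately show ?thesis by metis
qed

lemma Tl_T: "Tl k \<subseteq> T k"
  unfolding Tl_def using T_mono[of "k - 1" k] subspace_zero[OF sub_T] by auto

lemma A_Ek: "x \<in> Ek l \<Longrightarrow> A *\<^sub>v x = th l \<cdot>\<^sub>v x" unfolding Ek_def eig_def by auto
lemma As_Es: "x \<in> Es l \<Longrightarrow> As *\<^sub>v x = ths l \<cdot>\<^sub>v x" unfolding Es_def eig_def by auto

lemma A_S_inv: assumes "x \<in> S j" shows "A *\<^sub>v x \<in> S j"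
proof -
  obtain y where y: "x = vsum n y [j..<d+1]" "\<forall>l\<in>set [j..<d+1]. y l \<in> Ek l"
    using assms unfolding S_char by blast
  show ?thesis unfolding y(1)
  proof (rule maps_vsum[OF A sub_S])
    fix i assume i: "i \<in> set [j..<d+1]"
    show "y i \<in> carrier_vec n" using y(2) i Ek_c by blast
    have "A *\<^sub>v y i = th i \<cdot>\<^sub>v y i" using y(2) i A_Ek by blast
    moreover have "y i \<in> S j" using y(2) i Ek_S[of j i] by auto
    ultimately show "A *\<^sub>v y i \<in> S j" using subspace_smult[OF sub_S] by simp
  qed
qed

lemma As_T_inv: assumes "x \<in> T k" shows "As *\<^sub>v x \<in> T k"
proof -
  obtain y where y: "x = vsum n y [0..<k+1]" "\<forall>l\<in>set [0..<k+1]. y l \<in> Es l"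
    using assms unfolding T_char by blast
  show ?thesis unfolding y(1)
  proof (rule maps_vsum[OF As sub_T])
    fix i assume i: "i \<in> set [0..<k+1]"
    show "y i \<in> carrier_vec n" using y(2) i Es_c by blast
    have "As *\<^sub>v y i = ths i \<cdot>\<^sub>v y i" using y(2) i As_Es by blast
    moreover have "y i \<in> T k" using y(2) i Es_T[of i k] by auto
    ultimately show "As *\<^sub>v y i \<in> T k" using subspace_smult[OF sub_T] by simp
  qed
qed

lemma A2: assumes j: "j \<le> d" and x: "x \<in> S j" shows "A *\<^sub>v x - th j \<cdot>\<^sub>v x \<in> S (j+1)"
proof -
  obtain w u where wu: "w \<in> Ek j" "u \<in> S (j+1)" "x = w + u" using x S_split[OF j] by blast
  have c: "w \<in> carrier_vec n" "u \<in> carrier_vec n" using wu Ek_c S_c by auto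
  have "A *\<^sub>v x = A *\<^sub>v w + A *\<^sub>v u" unfolding wu(3) using A c by (rule mult_add_distrib_mat_vec)
  then have Ax: "A *\<^sub>v x = th j \<cdot>\<^sub>v w + A *\<^sub>v u" using A_Ek[OF wu(1)] by simp
  have "A *\<^sub>v x - th j \<cdot>\<^sub>v x = (th j \<cdot>\<^sub>v w + A *\<^sub>v u) - th j \<cdot>\<^sub>v (w + u)"
    by (subst Ax, subst wu(3), rule refl)
  also have "\<dots> = A *\<^sub>v u - th j \<cdot>\<^sub>v u" using c A by (intro VL1) auto
  finally have "A *\<^sub>v x - th j \<cdot>\<^sub>v x = A *\<^sub>v u - th j \<cdot>\<^sub>v u" .
  moreover have "A *\<^sub>v u - th j \<cdot>\<^sub>v u \<in> S (j+1)"
    using A_S_inv[OF wu(2)] wu(2) by (intro subspace_minus[OF sub_S] subspace_smult[OF sub_S])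
  ultimately show ?thesis by simp
qed

lemma A3: assumes x: "x \<in> T k" shows "As *\<^sub>v x - ths k \<cdot>\<^sub>v x \<in> Tl k"
proof (cases k)
  case 0
  then have "x \<in> Es 0" using x T0 by simp
  then have "As *\<^sub>v x - ths k \<cdot>\<^sub>v x = 0\<^sub>v n" using As_Es[of x 0] Es_c[of x 0] 0 by (intro eq_vecI) auto
  then show ?thesis unfolding Tl_def using 0 by simp
next
  case (Suc m)
  obtain w u where wu: "w \<in> T m" "u \<in> Es (Suc m)" "x = w + u" using x T_dec Suc by blast
  have c: "w \<in> carrier_vec n" "u \<in> carrier_vec n" using wu T_c Es_c by auto
  have "As *\<^sub>v x = As *\<^sub>v w + As *\<^sub>v u" unfolding wu(3) using As c by (rule mult_add_distrib_mat_vec)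
  then have Ax: "As *\<^sub>v x = As *\<^sub>v w + ths k \<cdot>\<^sub>v u" using As_Es[OF wu(2)] Suc by simp
  have "As *\<^sub>v x - ths k \<cdot>\<^sub>v x = (As *\<^sub>v w + ths k \<cdot>\<^sub>v u) - ths k \<cdot>\<^sub>v (w + u)"
    by (subst Ax, subst wu(3), rule refl)
  also have "\<dots> = As *\<^sub>v w - ths k \<cdot>\<^sub>v w" using c As by (intro VL2) auto
  finally have "As *\<^sub>v x - ths k \<cdot>\<^sub>v x = As *\<^sub>v w - ths k \<cdot>\<^sub>v w" .
  moreover have "As *\<^sub>v w - ths k \<cdot>\<^sub>v w \<in> T m"
    using As_T_inv[OF wu(1)] wu(1) by (intro subspace_minus[OF sub_T] subspace_smult[OF sub_T])
  ultimately show ?thesis unfolding Tl_def using Suc by simp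
qed

lemma A1: assumes k: "k < d" and x: "x \<in> T k" shows "A *\<^sub>v x \<in> T (k+1)"
proof -
  obtain y where y: "x = vsum n y [0..<k+1]" "\<forall>l\<in>set [0..<k+1]. y l \<in> Es l"
    using x unfolding T_char by blast
  show ?thesis unfolding y(1)
  proof (rule maps_vsum[OF A sub_T])
    fix i assume i: "i \<in> set [0..<k+1]"
    show "y i \<in> carrier_vec n" using y(2) i Es_c by blast
    have yi: "y i \<in> eig n As (ths i)" using y(2) i unfolding Es_def by blast
    obtain z where z: "\<forall>l\<le>d. z l \<in> eig n As (ths l)" "\<forall>l\<le>d. (l + 1 < i \<or> i + 1 < l) \<longrightarrow> z l = 0\<^sub>v n"
      "A *\<^sub>v y i = vsum n z [0..<d+1]"
      using tri_vsum[OF As A spAs evAs injAs triA _ yi] i k by auto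
    have "vsum n z [0..<d+1] = vsum n z [0..<k+2]"
    proof (rule vsum_restrict)
      show "0 \<le> k + 2" "k + 2 \<le> d + 1" using k by auto
      show "\<And>l. l < d + 1 \<Longrightarrow> l < 0 \<or> k + 2 \<le> l \<Longrightarrow> z l = 0\<^sub>v n"
        using z(2) i by auto
      show "\<And>l. l < d + 1 \<Longrightarrow> z l \<in> carrier_vec n" using z(1) by (auto simp: less_Suc_eq_le eig_def)
    qed
    moreover have "vsum n z [0..<k+2] \<in> T (k+1)" unfolding T_char Es_def using z(1) k
      by (intro CollectI exI[of _ z]) auto
    ultimately show "A *\<^sub>v y i \<in> T (k+1)" using z(3) by simp
  qed
qed

lemma A4: assumes j: "1 \<le> j" "j \<le> d + 1" and x: "x \<in> S j" shows "As *\<^sub>v x \<in> S (j - 1)"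
proof -
  obtain y where y: "x = vsum n y [j..<d+1]" "\<forall>l\<in>set [j..<d+1]. y l \<in> Ek l"
    using x unfolding S_char by blast
  show ?thesis unfolding y(1)
  proof (rule maps_vsum[OF As sub_S])
    fix i assume i: "i \<in> set [j..<d+1]"
    show "y i \<in> carrier_vec n" using y(2) i Ek_c by blast
    have yi: "y i \<in> eig n A (th i)" using y(2) i unfolding Ek_def by blast
    obtain z where z: "\<forall>l\<le>d. z l \<in> eig n A (th l)" "\<forall>l\<le>d. (l + 1 < i \<or> i + 1 < l) \<longrightarrow> z l = 0\<^sub>v n"
      "As *\<^sub>v y i = vsum n z [0..<d+1]"
      using tri_vsum[OF A As spA evA injA triAs _ yi] i by auto
    have "vsum n z [0..<d+1] = vsum n z [j - 1..<d+1]"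
    proof (rule vsum_restrict)
      show "j - 1 \<le> d + 1" "d + 1 \<le> d + 1" using j by auto
      show "\<And>l. l < d + 1 \<Longrightarrow> l < j - 1 \<or> d + 1 \<le> l \<Longrightarrow> z l = 0\<^sub>v n"
        using z(2) i j by auto
      show "\<And>l. l < d + 1 \<Longrightarrow> z l \<in> carrier_vec n" using z(1) by (auto simp: less_Suc_eq_le eig_def)
    qed
    moreover have "vsum n z [j - 1..<d+1] \<in> S (j - 1)" unfolding S_char Ek_def using z(1) j
      by (intro CollectI exI[of _ z]) auto
    ultimately show "As *\<^sub>v y i \<in> S (j - 1)" using z(3) by simp
  qed
qed

lemma S1_ne: "\<not> carrier_vec n \<subseteq> S 1"
proof
  assume sub: "carrier_vec n \<subseteq> S 1"
  have "th 0 \<in> eigenvalues_of A" using evA by auto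
  then obtain v where v: "v \<in> carrier_vec n" "v \<noteq> 0\<^sub>v n" "A *\<^sub>v v = th 0 \<cdot>\<^sub>v v"
    using A unfolding eigenvalues_of_def eigenvalue_def eigenvector_def by auto
  let ?E = "prim_idem A (th 0)"
  have Ec: "?E \<in> carrier_mat n n" by (rule prim_idem_carrier[OF A])
  have 1: "?E *\<^sub>v v = v" using prim_idem_action[OF A v(1) v(3)] by simp
  obtain y where y: "v = vsum n y [1..<d+1]" "\<forall>l\<in>set [1..<d+1]. y l \<in> Ek l"
    using sub v(1) unfolding S_char by blast
  have yc: "\<And>l. l \<in> set [1..<d+1] \<Longrightarrow> y l \<in> carrier_vec n" using y(2) Ek_c by blast
  have "?E *\<^sub>v v = vsum n (\<lambda>i. ?E *\<^sub>v y i) [1..<d+1]"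
    unfolding y(1) by (rule vsum_mult[OF Ec]) (use yc in auto)
  also have "\<dots> = 0\<^sub>v n"
  proof (rule vsum_zero)
    fix i assume i: "i \<in> set [1..<d+1]"
    have ye: "y i \<in> carrier_vec n" "A *\<^sub>v y i = th i \<cdot>\<^sub>v y i" using y(2) i yc A_Ek by auto
    have "th i \<noteq> th 0" using i inj_onD[OF injA, of i 0] by auto
    then show "?E *\<^sub>v y i = 0\<^sub>v n" unfolding prim_idem_action[OF A ye] by simp
  qed
  finally show False using 1 v(2) by simp
qed

end



declare upt_Suc[simp del]

lemma vsum_snoc:
  assumes "\<And>i. i \<in> set [0..<m+1] \<Longrightarrow> y i \<in> carrier_vec n"
  shows "vsum n y [0..<m+1] = vsum n y [0..<m] + y m"
proof -
  have e: "[0..<m+1] = [0..<m] @ [m]" by (simp add: upt_Suc)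
  have "vsum n y [0..<m+1] = vsum n y [0..<m] + vsum n y [m]" unfolding e
    by (rule vsum_append) (use assms e in auto)
  moreover have "vsum n y [m] = y m" using assms by simp
  ultimately show ?thesis by simp
qed

lemma SL1: assumes E: "(th::'a::field) * x + y + z = c * (x + w)" shows "(th - c) * x = c * w - y - z"
proof -
  have "(th - c) * x - (c * w - y - z) = (th * x + y + z) - c * (x + w)" by (simp add: algebra_simps)
  then show ?thesis using E by simp
qed

lemma SL2: assumes E: "(a::'a::field) - th * f = - r" shows "th * u + r + a = th * (u + f)"
proof -
  have "(th * u + r + a) - th * (u + f) = (a - th * f) + r" by (simp add: algebra_simps)
  then show ?thesis using E by simp
qed

lemma VL4: "(u :: 'a :: field vec) \<in> carrier_vec n \<Longrightarrow> a \<in> carrier_vec n \<Longrightarrow>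
  t \<cdot>\<^sub>v a + (1 - t) \<cdot>\<^sub>v (c \<cdot>\<^sub>v u) = c \<cdot>\<^sub>v u + t \<cdot>\<^sub>v (a - c \<cdot>\<^sub>v u)"
  by (intro eq_vecI) (auto simp: algebra_simps)

lemma VL5:
  assumes c: "(u :: 'a :: field vec) \<in> carrier_vec n" "f \<in> carrier_vec n" "r \<in> carrier_vec n" "b \<in> carrier_vec n"
    and E: "th \<cdot>\<^sub>v u + r + b = c \<cdot>\<^sub>v (u + f)"
  shows "(th - c) \<cdot>\<^sub>v u = c \<cdot>\<^sub>v f - r - b"
proof (intro eq_vecI)
  fix i assume "i < dim_vec (c \<cdot>\<^sub>v f - r - b)"
  then have i: "i < n" using c by simp
  have "(th \<cdot>\<^sub>v u + r + b) $ i = (c \<cdot>\<^sub>v (u + f)) $ i" using E by simp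
  then have E': "th * u $ i + r $ i + b $ i = c * (u $ i + f $ i)" using i c by (simp add: add.assoc)
  have "(th - c) * u $ i = c * f $ i - r $ i - b $ i" using SL1[OF E'] .
  then show "((th - c) \<cdot>\<^sub>v u) $ i = (c \<cdot>\<^sub>v f - r - b) $ i" using i c by simp
next
  show "dim_vec ((th - c) \<cdot>\<^sub>v u) = dim_vec (c \<cdot>\<^sub>v f - r - b)" using c by simp
qed

lemma VL6: "(c :: 'a :: field) \<noteq> 0 \<Longrightarrow> u \<in> carrier_vec n \<Longrightarrow> u = (1 / c) \<cdot>\<^sub>v (c \<cdot>\<^sub>v u)"
  by (intro eq_vecI) auto

lemma VL7: "(c :: 'a :: field) * (a - b) = 1 \<Longrightarrow> u \<in> carrier_vec n \<Longrightarrow> r \<in> carrier_vec n \<Longrightarrow>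
  c \<cdot>\<^sub>v (a \<cdot>\<^sub>v u + r) - b \<cdot>\<^sub>v (c \<cdot>\<^sub>v u) = u + c \<cdot>\<^sub>v r"
proof (intro eq_vecI)
  fix i assume cc: "c * (a - b) = 1" "u \<in> carrier_vec n" "r \<in> carrier_vec n" and "i < dim_vec (u + c \<cdot>\<^sub>v r)"
  then have i: "i < n" by simp
  have "c * (a * u $ i + r $ i) - b * (c * u $ i) = (c * (a - b)) * u $ i + c * r $ i"
    by (simp add: algebra_simps)
  then have "c * (a * u $ i + r $ i) - b * (c * u $ i) = u $ i + c * r $ i" using cc(1) by simp
  then show "(c \<cdot>\<^sub>v (a \<cdot>\<^sub>v u + r) - b \<cdot>\<^sub>v (c \<cdot>\<^sub>v u)) $ i = (u + c \<cdot>\<^sub>v r) $ i" using i cc by simp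
qed auto

lemma VL9: "(z1 :: 'a :: field vec) \<in> carrier_vec n \<Longrightarrow> z2 \<in> carrier_vec n \<Longrightarrow> b1 \<in> carrier_vec n \<Longrightarrow>
  b2 \<in> carrier_vec n \<Longrightarrow> (b1 + b2) - th \<cdot>\<^sub>v (z1 + z2) = (b1 - th \<cdot>\<^sub>v z1) + (b2 - th \<cdot>\<^sub>v z2)"
  by (intro eq_vecI) (auto simp: algebra_simps)

lemma VL9b: "(u :: 'a :: field vec) \<in> carrier_vec n \<Longrightarrow> f \<in> carrier_vec n \<Longrightarrow> r \<in> carrier_vec n \<Longrightarrow>
  (u + c \<cdot>\<^sub>v r) + (f - c \<cdot>\<^sub>v r) = u + f"
  by (intro eq_vecI) (auto simp: algebra_simps)

lemma VL10: assumes "(u :: 'a :: field vec) \<in> carrier_vec n" "f \<in> carrier_vec n" "r \<in> carrier_vec n"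
    "a \<in> carrier_vec n" "a - th \<cdot>\<^sub>v f = - r"
  shows "(th \<cdot>\<^sub>v u + r) + a = th \<cdot>\<^sub>v (u + f)"
proof (intro eq_vecI)
  fix i assume "i < dim_vec (th \<cdot>\<^sub>v (u + f))"
  then have i: "i < n" using assms by simp
  have "(a - th \<cdot>\<^sub>v f) $ i = (- r) $ i" using assms(5) by simp
  then have "a $ i - th * f $ i = - r $ i" using i assms(1-4) by simp
  then have "th * u $ i + r $ i + a $ i = th * (u $ i + f $ i)" by (rule SL2)
  then show "(th \<cdot>\<^sub>v u + r + a) $ i = (th \<cdot>\<^sub>v (u + f)) $ i" using i assms(1-4) by (simp add: add.assoc)
qed (use assms in auto)

lemma VL11: "(u :: 'a :: field vec) \<in> carrier_vec n \<Longrightarrow> f \<in> carrier_vec n \<Longrightarrow> g \<in> carrier_vec n \<Longrightarrow>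
  u + f = (u + g) + (f - g)"
  by (intro eq_vecI) auto

context tsys begin

lemma TS_zero: assumes h: "h \<le> d" shows "T h \<inter> S (h+1) = {0\<^sub>v n}"
proof -
  define W where "W = ssum n (map (\<lambda>h. T h \<inter> S (h+1)) [0..<d+1])"
  have subW: "subspace_vec n W" unfolding W_def
    by (rule ssum_subspace) (auto intro: subspace_inter sub_T sub_S)
  have Wchar: "W = {vsum n y [0..<d+1] | y. \<forall>i\<in>set [0..<d+1]. y i \<in> T i \<inter> S (i+1)}"
    unfolding W_def by (rule ssum_char) simp
  have inW: "T i \<inter> S (i+1) \<subseteq> W" if "i \<le> d" for i
    using subset_ssum[where W="\<lambda>h. T h \<inter> S (h+1)" and j=i and xs="[0..<d+1]" and n=n] that
    unfolding W_def by (auto intro: subspace_inter sub_T sub_S)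
  have Ainv: "\<forall>w\<in>W. A *\<^sub>v w \<in> W"
  proof
    fix w assume "w \<in> W"
    then obtain y where y: "w = vsum n y [0..<d+1]" "\<forall>i\<in>set [0..<d+1]. y i \<in> T i \<inter> S (i+1)"
      unfolding Wchar by blast
    show "A *\<^sub>v w \<in> W" unfolding y(1)
    proof (rule maps_vsum[OF A subW])
      fix i assume i: "i \<in> set [0..<d+1]"
      then have yi: "y i \<in> T i" "y i \<in> S (i+1)" "i \<le> d" using y(2) by auto
      show "y i \<in> carrier_vec n" using yi T_c by blast
      have yW: "y i \<in> W" using inW[OF yi(3)] yi(1,2) by blast
      show "A *\<^sub>v y i \<in> W"
      proof (cases "i = d")
        case True
        then have "y i = 0\<^sub>v n" using yi S_top by auto
        then show ?thesis using A subspace_zero[OF subW] mat_mult_zero_vec[of A n n] by simp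
      next
        case False
        then have i': "i < d" using yi by simp
        let ?r = "A *\<^sub>v y i - th (i+1) \<cdot>\<^sub>v y i"
        have r1: "?r \<in> S (i+1+1)" using A2[of "i+1" "y i"] i' yi(2) by simp
        have "A *\<^sub>v y i \<in> T (i+1)" using A1[OF i' yi(1)] .
        moreover have "y i \<in> T (i+1)" using yi(1) T_mono[of i "i+1"] by auto
        ultimately have r2: "?r \<in> T (i+1)" by (intro subspace_minus[OF sub_T] subspace_smult[OF sub_T])
        have "?r \<in> W" using inW[of "i+1"] r1 r2 i' by auto
        moreover have "th (i+1) \<cdot>\<^sub>v y i \<in> W" using subspace_smult[OF subW yW] .
        ultimately have "th (i+1) \<cdot>\<^sub>v y i + ?r \<in> W" using subspace_add[OF subW] by blast
        moreover have "A *\<^sub>v y i = th (i+1) \<cdot>\<^sub>v y i + ?r" using A yi T_c by (intro VL3) auto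
        ultimately show ?thesis by simp
      qed
    qed
  qed
  have Asinv: "\<forall>w\<in>W. As *\<^sub>v w \<in> W"
  proof
    fix w assume "w \<in> W"
    then obtain y where y: "w = vsum n y [0..<d+1]" "\<forall>i\<in>set [0..<d+1]. y i \<in> T i \<inter> S (i+1)"
      unfolding Wchar by blast
    show "As *\<^sub>v w \<in> W" unfolding y(1)
    proof (rule maps_vsum[OF As subW])
      fix i assume i: "i \<in> set [0..<d+1]"
      then have yi: "y i \<in> T i" "y i \<in> S (i+1)" "i \<le> d" using y(2) by auto
      show "y i \<in> carrier_vec n" using yi T_c by blast
      have yW: "y i \<in> W" using inW[OF yi(3)] yi(1,2) by blast
      let ?r = "As *\<^sub>v y i - ths i \<cdot>\<^sub>v y i"
      have rT: "?r \<in> Tl i" using A3[OF yi(1)] .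
      have rW: "?r \<in> W"
      proof (cases "i = 0")
        case True
        then show ?thesis using rT subspace_zero[OF subW] unfolding Tl_def by simp
      next
        case False
        then have r1: "?r \<in> T (i - 1)" using rT unfolding Tl_def by simp
        have "As *\<^sub>v y i \<in> S i" using A4[of "i+1" "y i"] yi by simp
        moreover have "y i \<in> S i" using yi(2) S_mono[of i "i+1"] by auto
        ultimately have r2: "?r \<in> S i" by (intro subspace_minus[OF sub_S] subspace_smult[OF sub_S])
        have "T (i - 1) \<inter> S (i - 1 + 1) \<subseteq> W" using inW[of "i - 1"] yi by simp
        then show ?thesis using r1 r2 False by auto
      qed
      have "ths i \<cdot>\<^sub>v y i \<in> W" using subspace_smult[OF subW yW] .
      then have "ths i \<cdot>\<^sub>v y i + ?r \<in> W" using rW subspace_add[OF subW] by blast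
      moreover have "As *\<^sub>v y i = ths i \<cdot>\<^sub>v y i + ?r" using As yi T_c by (intro VL3) auto
      ultimately show "As *\<^sub>v y i \<in> W" by simp
    qed
  qed
  have WS: "W \<subseteq> S 1"
  proof
    fix w assume "w \<in> W"
    then obtain y where y: "w = vsum n y [0..<d+1]" "\<forall>i\<in>set [0..<d+1]. y i \<in> T i \<inter> S (i+1)"
      unfolding Wchar by blast
    show "w \<in> S 1" unfolding y(1)
    proof (rule vsum_in_subspace[OF sub_S])
      fix i assume "i \<in> set [0..<d+1]"
      then have "y i \<in> S (i+1)" using y(2) by auto
      then show "y i \<in> S 1" using S_mono[of 1 "i+1"] by auto
    qed
  qed
  have "W \<noteq> carrier_vec n" using WS S1_ne by auto
  then have "W = {0\<^sub>v n}" using irr[OF subW Ainv Asinv] by blast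
  then show ?thesis using inW[OF h] subspace_zero[OF sub_T] subspace_zero[OF sub_S] by blast
qed

lemma U_T: "U k \<subseteq> T k" unfolding U_def by blast
lemma U_S: "U k \<subseteq> S k" unfolding U_def by blast

lemma U_span: "ssum n (map U [0..<d+1]) = carrier_vec n"
proof -
  define W where "W = ssum n (map U [0..<d+1])"
  have subW: "subspace_vec n W" unfolding W_def by (rule ssum_subspace) (auto intro: sub_U)
  have Wchar: "W = {vsum n y [0..<d+1] | y. \<forall>i\<in>set [0..<d+1]. y i \<in> U i}"
    unfolding W_def by (rule ssum_char) simp
  have inW: "U i \<subseteq> W" if "i \<le> d" for i
    unfolding W_def by (rule subset_ssum) (use that in \<open>auto intro: sub_U\<close>)
  have Ainv: "\<forall>w\<in>W. A *\<^sub>v w \<in> W"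
  proof
    fix w assume "w \<in> W"
    then obtain y where y: "w = vsum n y [0..<d+1]" "\<forall>i\<in>set [0..<d+1]. y i \<in> U i"
      unfolding Wchar by blast
    show "A *\<^sub>v w \<in> W" unfolding y(1)
    proof (rule maps_vsum[OF A subW])
      fix i assume i: "i \<in> set [0..<d+1]"
      then have yi: "y i \<in> T i" "y i \<in> S i" "i \<le> d" using y(2) unfolding U_def by auto
      show "y i \<in> carrier_vec n" using yi T_c by blast
      have yW: "y i \<in> W" using inW[OF yi(3)] yi(1,2) unfolding U_def by blast
      let ?r = "A *\<^sub>v y i - th i \<cdot>\<^sub>v y i"
      have r1: "?r \<in> S (i+1)" using A2[OF yi(3) yi(2)] .
      have rW: "?r \<in> W"
      proof (cases "i = d")
        case True
        then show ?thesis using r1 S_top subspace_zero[OF subW] by simp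
      next
        case False
        then have i': "i < d" using yi by simp
        have "A *\<^sub>v y i \<in> T (i+1)" using A1[OF i' yi(1)] .
        moreover have "y i \<in> T (i+1)" using yi(1) T_mono[of i "i+1"] by auto
        ultimately have r2: "?r \<in> T (i+1)" by (intro subspace_minus[OF sub_T] subspace_smult[OF sub_T])
        then show ?thesis using inW[of "i+1"] r1 i' unfolding U_def by auto
      qed
      have "th i \<cdot>\<^sub>v y i \<in> W" using subspace_smult[OF subW yW] .
      then have "th i \<cdot>\<^sub>v y i + ?r \<in> W" using rW subspace_add[OF subW] by blast
      moreover have "A *\<^sub>v y i = th i \<cdot>\<^sub>v y i + ?r" using A yi T_c by (intro VL3) auto
      ultimately show "A *\<^sub>v y i \<in> W" by simp
    qed
  qed
  have Asinv: "\<forall>w\<in>W. As *\<^sub>v w \<in> W"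
  proof
    fix w assume "w \<in> W"
    then obtain y where y: "w = vsum n y [0..<d+1]" "\<forall>i\<in>set [0..<d+1]. y i \<in> U i"
      unfolding Wchar by blast
    show "As *\<^sub>v w \<in> W" unfolding y(1)
    proof (rule maps_vsum[OF As subW])
      fix i assume i: "i \<in> set [0..<d+1]"
      then have yi: "y i \<in> T i" "y i \<in> S i" "i \<le> d" using y(2) unfolding U_def by auto
      show "y i \<in> carrier_vec n" using yi T_c by blast
      have yW: "y i \<in> W" using inW[OF yi(3)] yi(1,2) unfolding U_def by blast
      let ?r = "As *\<^sub>v y i - ths i \<cdot>\<^sub>v y i"
      have rT: "?r \<in> Tl i" using A3[OF yi(1)] .
      have rW: "?r \<in> W"
      proof (cases "i = 0")
        case True
        then show ?thesis using rT subspace_zero[OF subW] unfolding Tl_def by simp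
      next
        case False
        then have r1: "?r \<in> T (i - 1)" using rT unfolding Tl_def by simp
        have "As *\<^sub>v y i \<in> S (i - 1)" using A4[of i "y i"] yi False by simp
        moreover have "y i \<in> S (i - 1)" using yi(2) S_mono[of "i - 1" i] by auto
        ultimately have r2: "?r \<in> S (i - 1)" by (intro subspace_minus[OF sub_S] subspace_smult[OF sub_S])
        have "i - 1 \<le> d" using yi(3) by simp
        then have "U (i - 1) \<subseteq> W" by (rule inW)
        then show ?thesis using r1 r2 unfolding U_def by blast
      qed
      have "ths i \<cdot>\<^sub>v y i \<in> W" using subspace_smult[OF subW yW] .
      then have "ths i \<cdot>\<^sub>v y i + ?r \<in> W" using rW subspace_add[OF subW] by blast
      moreover have "As *\<^sub>v y i = ths i \<cdot>\<^sub>v y i + ?r" using As yi T_c by (intro VL3) auto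
      ultimately show "As *\<^sub>v y i \<in> W" by simp
    qed
  qed
  have "ths 0 \<in> eigenvalues_of As" using evAs by auto
  then obtain v where v: "v \<in> carrier_vec n" "v \<noteq> 0\<^sub>v n" "As *\<^sub>v v = ths 0 \<cdot>\<^sub>v v"
    using As unfolding eigenvalues_of_def eigenvalue_def eigenvector_def by auto
  have "v \<in> Es 0" unfolding Es_def eig_def using v by auto
  then have "v \<in> U 0" unfolding U_def using T0 S_full v(1) by auto
  then have "v \<in> W" using inW[of 0] by auto
  then have "W \<noteq> {0\<^sub>v n}" using v(2) by auto
  then show ?thesis using irr[OF subW Ainv Asinv] unfolding W_def by blast
qed

lemma U_Tl_zero: assumes k: "k \<le> d" and u: "u \<in> U k" "u \<in> Tl k" shows "u = 0\<^sub>v n"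
proof (cases k)
  case 0
  then show ?thesis using u unfolding Tl_def by simp
next
  case (Suc m)
  then have "u \<in> T m \<inter> S (m + 1)" using u unfolding Tl_def U_def by auto
  then show ?thesis using TS_zero[of m] k Suc by auto
qed

lemma decomp: assumes k: "k \<le> d" and v: "v \<in> T k"
  shows "\<exists>u f. u \<in> U k \<and> f \<in> Tl k \<and> v = u + f"
proof -
  have "v \<in> ssum n (map U [0..<d+1])" using U_span v T_c by auto
  then obtain y where y: "v = vsum n y [0..<d+1]" "\<forall>i\<in>set [0..<d+1]. y i \<in> U i"
    using ssum_char[of "[0..<d+1]" n U] by auto
  have yc: "\<And>i. i \<in> set [0..<d+1] \<Longrightarrow> y i \<in> carrier_vec n" using y(2) U_c by blast
  have vsT: "vsum n y [0..<m+1] \<in> T m" if m: "m \<le> d" for m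
  proof (rule vsum_in_subspace[OF sub_T])
    fix i assume i: "i \<in> set [0..<m+1]"
    then have "i \<in> set [0..<d+1]" "i \<le> m" using m by auto
    then have "y i \<in> U i" "i \<le> m" using y(2) by auto
    then show "y i \<in> T m" using T_mono U_T by blast
  qed
  have claim: "\<forall>m. d - m = j \<longrightarrow> k \<le> m \<longrightarrow> m \<le> d \<longrightarrow> v = vsum n y [0..<m+1]" for j
  proof (induction j)
    case 0
    then show ?case using y(1) by auto
  next
    case (Suc j)
    show ?case
    proof (intro allI impI)
      fix m assume m: "d - m = Suc j" "k \<le> m" "m \<le> d"
      then have v1: "v = vsum n y [0..<m+1+1]" using Suc.IH by auto
      have ycm: "\<And>i. i \<in> set [0..<m+1+1] \<Longrightarrow> y i \<in> carrier_vec n" using yc m by auto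
      have e: "vsum n y [0..<m+1+1] = vsum n y [0..<m+1] + y (m+1)"
        by (rule vsum_snoc) (use ycm in auto)
      have vc: "vsum n y [0..<m+1] \<in> carrier_vec n" using vsT[of m] m T_c by auto
      have ym: "y (m+1) \<in> carrier_vec n" using ycm by auto
      have "y (m+1) = v - vsum n y [0..<m+1]" using v1 e vc ym by (auto intro!: eq_vecI)
      moreover have "v \<in> T m" using v T_mono[OF m(2)] by auto
      ultimately have "y (m+1) \<in> T m" using vsT[of m] m
        by (simp add: subspace_minus[OF sub_T])
      moreover have "m + 1 \<in> set [0..<d+1]" using m by auto
      then have "y (m+1) \<in> U (m+1)" using y(2) by blast
      then have "y (m+1) \<in> S (m+1)" using U_S by blast
      ultimately have "y (m+1) = 0\<^sub>v n" using TS_zero[of m] m by auto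
      then show "v = vsum n y [0..<m+1]" using v1 e vc by simp
    qed
  qed
  have vk: "v = vsum n y [0..<k+1]" using claim[of "d - k"] k by auto
  have ek: "vsum n y [0..<k+1] = vsum n y [0..<k] + y k"
    by (rule vsum_snoc) (use yc k in auto)
  have fT: "vsum n y [0..<k] \<in> Tl k"
  proof (cases "k = 0")
    case True
    then show ?thesis unfolding Tl_def by simp
  next
    case False
    then have "[0..<k] = [0..<(k - 1) + 1]" by simp
    then show ?thesis using vsT[of "k - 1"] k False unfolding Tl_def by simp
  qed
  have "v = y k + vsum n y [0..<k]" using vk ek fT Tl_c yc k
    by (simp add: comm_add_vec[of "y k" n])
  moreover have "y k \<in> U k" using y(2) k by auto
  ultimately show ?thesis using fT by blast
qed

end



declare upt_Suc[simp del]

context tsys begin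

definition "Bs = t \<cdot>\<^sub>m As + (1 - t) \<cdot>\<^sub>m K"

lemma Bs_c: "Bs \<in> carrier_mat n n" unfolding Bs_def using As Kc by auto

lemma Bs_mult: assumes v: "v \<in> carrier_vec n"
  shows "Bs *\<^sub>v v = t \<cdot>\<^sub>v (As *\<^sub>v v) + (1 - t) \<cdot>\<^sub>v (K *\<^sub>v v)"
proof -
  have "Bs *\<^sub>v v = (t \<cdot>\<^sub>m As) *\<^sub>v v + ((1 - t) \<cdot>\<^sub>m K) *\<^sub>v v"
    unfolding Bs_def by (rule add_mult_distrib_mat_vec[of _ n n]) (use As Kc v in auto)
  also have "(t \<cdot>\<^sub>m As) *\<^sub>v v = t \<cdot>\<^sub>v (As *\<^sub>v v)" by (rule smult_mat_mult_vec[OF As v])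
  also have "((1 - t) \<cdot>\<^sub>m K) *\<^sub>v v = (1 - t) \<cdot>\<^sub>v (K *\<^sub>v v)" by (rule smult_mat_mult_vec[OF Kc v])
  finally show ?thesis .
qed

lemma split_U: "split_comp n d A th As ths i = U i"
proof -
  have e1: "(\<lambda>k. image_mat (prim_idem As (ths k))) = Es"
    by (rule ext) (simp add: image_prim_idem[OF As spAs] Es_def)
  have e2: "(\<lambda>k. image_mat (prim_idem A (th k))) = Ek"
    by (rule ext) (simp add: image_prim_idem[OF A spA] Ek_def)
  show ?thesis unfolding split_comp_def e1 e2 U_def T_def S_def by (rule refl)
qed

lemma K_U: "i \<le> d \<Longrightarrow> u \<in> U i \<Longrightarrow> K *\<^sub>v u = ths i \<cdot>\<^sub>v u"
  using Khyp split_U by blast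

lemma Bs_U: assumes k: "k \<le> d" and u: "u \<in> U k" shows "\<exists>r\<in>Tl k. Bs *\<^sub>v u = ths k \<cdot>\<^sub>v u + r"
proof -
  have uc: "u \<in> carrier_vec n" using u U_c by blast
  have "Bs *\<^sub>v u = t \<cdot>\<^sub>v (As *\<^sub>v u) + (1 - t) \<cdot>\<^sub>v (ths k \<cdot>\<^sub>v u)"
    using Bs_mult[OF uc] K_U[OF k u] by simp
  also have "\<dots> = ths k \<cdot>\<^sub>v u + t \<cdot>\<^sub>v (As *\<^sub>v u - ths k \<cdot>\<^sub>v u)"
    by (rule VL4) (use uc As in auto)
  finally have e: "Bs *\<^sub>v u = ths k \<cdot>\<^sub>v u + t \<cdot>\<^sub>v (As *\<^sub>v u - ths k \<cdot>\<^sub>v u)" .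
  have "t \<cdot>\<^sub>v (As *\<^sub>v u - ths k \<cdot>\<^sub>v u) \<in> Tl k"
    using A3[of u k] u U_T by (intro subspace_smult[OF sub_Tl]) auto
  then show ?thesis using e by blast
qed

lemma Bs_step:
  assumes k: "k \<le> d" and x: "x \<in> T k" and hf: "\<forall>f\<in>Tl k. Bs *\<^sub>v f \<in> T k"
  shows "Bs *\<^sub>v x \<in> T k"
proof -
  obtain u f where uf: "u \<in> U k" "f \<in> Tl k" "x = u + f" using decomp[OF k x] by blast
  obtain r where r: "r \<in> Tl k" "Bs *\<^sub>v u = ths k \<cdot>\<^sub>v u + r" using Bs_U[OF k uf(1)] by blast
  have c: "u \<in> carrier_vec n" "f \<in> carrier_vec n" using uf U_c Tl_c by auto
  have "Bs *\<^sub>v x = Bs *\<^sub>v u + Bs *\<^sub>v f" unfolding uf(3) by (rule mult_add_distrib_mat_vec[OF Bs_c c])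
  moreover have "ths k \<cdot>\<^sub>v u \<in> T k" using uf(1) U_T subspace_smult[OF sub_T] by blast
  moreover have "r \<in> T k" using r(1) Tl_T by blast
  moreover have "Bs *\<^sub>v f \<in> T k" using hf uf(2) by blast
  ultimately show ?thesis using r(2) subspace_add[OF sub_T] by metis
qed

lemma Bs_T: "k \<le> d \<Longrightarrow> x \<in> T k \<Longrightarrow> Bs *\<^sub>v x \<in> T k"
proof (induction k arbitrary: x)
  case 0
  have "\<forall>f\<in>Tl 0. Bs *\<^sub>v f \<in> T 0"
    unfolding Tl_def using mat_mult_zero_vec[OF Bs_c] subspace_zero[OF sub_T] by simp
  then show ?case using Bs_step 0 by blast
next
  case (Suc m)
  have "\<forall>f\<in>Tl (Suc m). Bs *\<^sub>v f \<in> T (Suc m)"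
    unfolding Tl_def using Suc.IH Suc.prems T_mono[of m "Suc m"] by auto
  then show ?case using Bs_step Suc.prems by blast
qed

lemma Bs_ker: "k \<le> d \<Longrightarrow> x \<in> T k \<Longrightarrow> Bs *\<^sub>v x = ths 0 \<cdot>\<^sub>v x \<Longrightarrow> x \<in> T 0"
proof (induction k arbitrary: x)
  case 0
  then show ?case by simp
next
  case (Suc m)
  have k: "Suc m \<le> d" using Suc.prems by simp
  obtain u f where uf: "u \<in> U (Suc m)" "f \<in> Tl (Suc m)" "x = u + f" using decomp[OF k Suc.prems(2)] by blast
  obtain r where r: "r \<in> Tl (Suc m)" "Bs *\<^sub>v u = ths (Suc m) \<cdot>\<^sub>v u + r" using Bs_U[OF k uf(1)] by blast
  have fT: "f \<in> T m" and rT: "r \<in> T m" using uf(2) r(1) unfolding Tl_def by auto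
  have c: "u \<in> carrier_vec n" "f \<in> carrier_vec n" "r \<in> carrier_vec n" using uf(1) fT rT U_c T_c by auto
  have bT: "Bs *\<^sub>v f \<in> T m" using Bs_T[of m f] fT k by simp
  have bc: "Bs *\<^sub>v f \<in> carrier_vec n" using bT T_c by blast
  have "Bs *\<^sub>v x = Bs *\<^sub>v u + Bs *\<^sub>v f" unfolding uf(3) by (rule mult_add_distrib_mat_vec[OF Bs_c c(1,2)])
  then have E: "ths (Suc m) \<cdot>\<^sub>v u + r + Bs *\<^sub>v f = ths 0 \<cdot>\<^sub>v (u + f)"
    using Suc.prems(3) r(2) uf(3) by simp
  have e: "(ths (Suc m) - ths 0) \<cdot>\<^sub>v u = ths 0 \<cdot>\<^sub>v f - r - Bs *\<^sub>v f" by (rule VL5[OF c bc E])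
  have "ths 0 \<cdot>\<^sub>v f - r - Bs *\<^sub>v f \<in> T m"
    using fT rT bT by (intro subspace_minus[OF sub_T] subspace_smult[OF sub_T])
  then have 1: "(ths (Suc m) - ths 0) \<cdot>\<^sub>v u \<in> T m" using e by simp
  have ne: "ths (Suc m) - ths 0 \<noteq> 0" using inj_onD[OF injAs, of "Suc m" 0] k by auto
  have "u = (1 / (ths (Suc m) - ths 0)) \<cdot>\<^sub>v ((ths (Suc m) - ths 0) \<cdot>\<^sub>v u)" by (rule VL6[OF ne c(1)])
  then have "u \<in> T m" using subspace_smult[OF sub_T 1] by metis
  then have "u \<in> Tl (Suc m)" unfolding Tl_def by simp
  then have "u = 0\<^sub>v n" using U_Tl_zero[OF k uf(1)] by simp
  then have xf: "x = f" using uf(3) c by simp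
  show ?case using Suc.IH[of f] fT k Suc.prems(3) xf by simp
qed

abbreviation "Lm j z \<equiv> Bs *\<^sub>v z - ths j \<cdot>\<^sub>v z"

lemma surj_step:
  assumes j: "j \<le> d" "k < j" and g: "g \<in> T k" and hf: "\<forall>h\<in>Tl k. \<exists>z\<in>Tl k. Lm j z = h"
  shows "\<exists>z\<in>T k. Lm j z = g"
proof -
  have k: "k \<le> d" using j by simp
  obtain u f where uf: "u \<in> U k" "f \<in> Tl k" "g = u + f" using decomp[OF k g] by blast
  obtain r where r: "r \<in> Tl k" "Bs *\<^sub>v u = ths k \<cdot>\<^sub>v u + r" using Bs_U[OF k uf(1)] by blast
  have c: "u \<in> carrier_vec n" "f \<in> carrier_vec n" "r \<in> carrier_vec n" using uf r U_c Tl_c by auto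
  have ne: "ths k - ths j \<noteq> 0" using inj_onD[OF injAs, of k j] j by auto
  define cc where "cc = 1 / (ths k - ths j)"
  have cc1: "cc * (ths k - ths j) = 1" unfolding cc_def using ne by simp
  define z1 where "z1 = cc \<cdot>\<^sub>v u"
  have z1c: "z1 \<in> carrier_vec n" unfolding z1_def using c by simp
  have z1T: "z1 \<in> T k" unfolding z1_def using uf(1) U_T subspace_smult[OF sub_T] by blast
  have "Bs *\<^sub>v z1 = cc \<cdot>\<^sub>v (Bs *\<^sub>v u)" unfolding z1_def by (rule mult_mat_vec[OF Bs_c c(1)])
  then have L1: "Lm j z1 = u + cc \<cdot>\<^sub>v r" unfolding r(2) z1_def by (rule ssubst) (rule VL7[OF cc1 c(1,3)])
  have "f - cc \<cdot>\<^sub>v r \<in> Tl k" using uf(2) r(1) by (intro subspace_minus[OF sub_Tl] subspace_smult[OF sub_Tl])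
  then obtain z' where z': "z' \<in> Tl k" "Lm j z' = f - cc \<cdot>\<^sub>v r" using hf by blast
  have z'c: "z' \<in> carrier_vec n" using z' Tl_c by blast
  have "Bs *\<^sub>v (z1 + z') = Bs *\<^sub>v z1 + Bs *\<^sub>v z'" by (rule mult_add_distrib_mat_vec[OF Bs_c z1c z'c])
  then have "Lm j (z1 + z') = Lm j z1 + Lm j z'"
    using VL9[OF z1c z'c, of "Bs *\<^sub>v z1" "Bs *\<^sub>v z'" "ths j"] Bs_c z1c z'c by simp
  also have "\<dots> = u + f" unfolding L1 z'(2) by (rule VL9b[OF c(1,2,3)])
  finally have "Lm j (z1 + z') = g" using uf(3) by simp
  moreover have "z1 + z' \<in> T k" using z1T z' Tl_T subspace_add[OF sub_T] by blast
  ultimately show ?thesis by blast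
qed

lemma Bs_surj: "j \<le> d \<Longrightarrow> k < j \<Longrightarrow> g \<in> T k \<Longrightarrow> \<exists>z\<in>T k. Lm j z = g"
proof (induction k arbitrary: g)
  case 0
  have "\<forall>h\<in>Tl 0. \<exists>z\<in>Tl 0. Lm j z = h"
  proof
    fix h assume "h \<in> Tl 0"
    then have h: "h = 0\<^sub>v n" unfolding Tl_def by simp
    have "Lm j (0\<^sub>v n) = 0\<^sub>v n" using mat_mult_zero_vec[OF Bs_c] by (intro eq_vecI) auto
    then show "\<exists>z\<in>Tl 0. Lm j z = h" unfolding Tl_def h by auto
  qed
  then show ?case using surj_step 0 by blast
next
  case (Suc m)
  have "\<forall>h\<in>Tl (Suc m). \<exists>z\<in>Tl (Suc m). Lm j z = h"
    unfolding Tl_def using Suc.IH Suc.prems by auto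
  then show ?case using surj_step Suc.prems by blast
qed

lemma ES_step:
  assumes k: "k \<le> d" and v: "v \<in> T k" and hs: "\<forall>h\<in>Tl k. \<exists>z\<in>Tl k. Lm k z = h"
    and he: "\<forall>w\<in>Tl k. w \<in> ES n Bs"
  shows "v \<in> ES n Bs"
proof -
  obtain u f where uf: "u \<in> U k" "f \<in> Tl k" "v = u + f" using decomp[OF k v] by blast
  obtain r where r: "r \<in> Tl k" "Bs *\<^sub>v u = ths k \<cdot>\<^sub>v u + r" using Bs_U[OF k uf(1)] by blast
  have c: "u \<in> carrier_vec n" "f \<in> carrier_vec n" "r \<in> carrier_vec n" using uf r U_c Tl_c by auto
  have "- r \<in> Tl k" using r(1) by (rule subspace_uminus[OF sub_Tl])
  then obtain f' where f': "f' \<in> Tl k" "Lm k f' = - r" using hs by blast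
  have f'c: "f' \<in> carrier_vec n" using f' Tl_c by blast
  have bc: "Bs *\<^sub>v f' \<in> carrier_vec n" using Bs_c f'c by simp
  have "Bs *\<^sub>v (u + f') = Bs *\<^sub>v u + Bs *\<^sub>v f'" by (rule mult_add_distrib_mat_vec[OF Bs_c c(1) f'c])
  also have "\<dots> = ths k \<cdot>\<^sub>v (u + f')" unfolding r(2) by (rule VL10[OF c(1) f'c c(3) bc f'(2)])
  finally have ev: "Bs *\<^sub>v (u + f') = ths k \<cdot>\<^sub>v (u + f')" .
  have "f - f' \<in> Tl k" using uf(2) f'(1) by (rule subspace_minus[OF sub_Tl])
  then have "f - f' \<in> ES n Bs" using he by blast
  then have "(u + f') + (f - f') \<in> ES n Bs" using ES.ESs[of "u + f'" n Bs "ths k" "f - f'"] ev c f'c by simp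
  moreover have "v = (u + f') + (f - f')" unfolding uf(3) by (rule VL11[OF c(1,2) f'c])
  ultimately show ?thesis by simp
qed

lemma ES_Bs: "k \<le> d \<Longrightarrow> v \<in> T k \<Longrightarrow> v \<in> ES n Bs"
proof (induction k arbitrary: v)
  case 0
  have hs: "\<forall>h\<in>Tl 0. \<exists>z\<in>Tl 0. Lm 0 z = h"
  proof
    fix h assume "h \<in> Tl 0"
    then have h: "h = 0\<^sub>v n" unfolding Tl_def by simp
    have "Lm 0 (0\<^sub>v n) = 0\<^sub>v n" using mat_mult_zero_vec[OF Bs_c] by (intro eq_vecI) auto
    then show "\<exists>z\<in>Tl 0. Lm 0 z = h" unfolding Tl_def h by auto
  qed
  have "\<forall>w\<in>Tl 0. w \<in> ES n Bs" unfolding Tl_def using ES.ES0 by auto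
  then show ?case using ES_step 0 hs by blast
next
  case (Suc m)
  have hs: "\<forall>h\<in>Tl (Suc m). \<exists>z\<in>Tl (Suc m). Lm (Suc m) z = h"
    unfolding Tl_def using Bs_surj[of "Suc m" m] Suc.prems by auto
  have "\<forall>w\<in>Tl (Suc m). w \<in> ES n Bs" unfolding Tl_def using Suc.IH Suc.prems by auto
  then show ?case using ES_step Suc.prems hs by blast
qed

lemma eigB: "eig n Bs (ths 0) = Es 0"
proof
  show "eig n Bs (ths 0) \<subseteq> Es 0"
  proof
    fix x assume "x \<in> eig n Bs (ths 0)"
    then have x: "x \<in> carrier_vec n" "Bs *\<^sub>v x = ths 0 \<cdot>\<^sub>v x" by (auto simp: eig_def)
    then have "x \<in> T d" using T_full by simp
    then have "x \<in> T 0" using Bs_ker[of d x] x by simp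
    then show "x \<in> Es 0" using T0 by simp
  qed
  show "Es 0 \<subseteq> eig n Bs (ths 0)"
  proof
    fix x assume x: "x \<in> Es 0"
    then have xc: "x \<in> carrier_vec n" using Es_c by blast
    have "x \<in> U 0" unfolding U_def using x T0 S_full xc by simp
    then obtain r where "r \<in> Tl 0" "Bs *\<^sub>v x = ths 0 \<cdot>\<^sub>v x + r" using Bs_U[of 0 x] by auto
    then have "Bs *\<^sub>v x = ths 0 \<cdot>\<^sub>v x" unfolding Tl_def using xc by simp
    then show "x \<in> eig n Bs (ths 0)" using xc by (simp add: eig_def)
  qed
qed

lemma main_loc: "split_comp n d A th As ths 0 = image_mat (prim_idem (t \<cdot>\<^sub>m As + (1 - t) \<cdot>\<^sub>m K) (ths 0))"
proof -
  have "image_mat (prim_idem Bs (ths 0)) = eig n Bs (ths 0)"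
    by (rule image_prim_idem[OF Bs_c]) (use ES_Bs[of d] T_full in auto)
  also have "\<dots> = Es 0" by (rule eigB)
  also have "\<dots> = U 0" unfolding U_def using T0 S_full Es_c by auto
  also have "\<dots> = split_comp n d A th As ths 0" using split_U by simp
  finally show ?thesis unfolding Bs_def by simp
qed

end

theorem lemma7p7:
  fixes A As K :: "'a::alg_closed_field mat" and q t :: 'a and n d :: nat
  assumes "n > 0" and "d \<ge> 1"
    and "q \<noteq> 0" and "\<forall>m::nat. m > 0 \<longrightarrow> q ^ m \<noteq> 1"
    and "tridiagonal_system n d A (\<lambda>i. q powi (2 * int i - int d))
                              As (\<lambda>i. q powi (int d - 2 * int i))"
    and "q_serre q A As"
    and "K \<in> carrier_mat n n"
    and "\<forall>i\<le>d. \<forall>u \<in> split_comp n d A (\<lambda>i. q powi (2 * int i - int d))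
                                As (\<lambda>i. q powi (int d - 2 * int i)) i.
           K *\<^sub>v u = q powi (int d - 2 * int i) \<cdot>\<^sub>v u"
  shows "split_comp n d A (\<lambda>i. q powi (2 * int i - int d)) As (\<lambda>i. q powi (int d - 2 * int i)) 0
         = image_mat (prim_idem (t \<cdot>\<^sub>m As + (1 - t) \<cdot>\<^sub>m K) (q powi int d))"
proof -
  let ?th = "\<lambda>i. q powi (2 * int i - int d)"
  let ?ths = "\<lambda>i. q powi (int d - 2 * int i)"
  note tds = assms(5)[unfolded tridiagonal_system_def]
  note t1 = tds[THEN conjunct1]
  note t2 = tds[THEN conjunct2, THEN conjunct1]
  note t3 = tds[THEN conjunct2, THEN conjunct2, THEN conjunct1]
  note t4 = tds[THEN conjunct2, THEN conjunct2, THEN conjunct2, THEN conjunct1]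
  note t5 = tds[THEN conjunct2, THEN conjunct2, THEN conjunct2, THEN conjunct2, THEN conjunct1]
  note t6 = tds[THEN conjunct2, THEN conjunct2, THEN conjunct2, THEN conjunct2, THEN conjunct2, THEN conjunct1]
  note t7 = tds[THEN conjunct2, THEN conjunct2, THEN conjunct2, THEN conjunct2, THEN conjunct2, THEN conjunct2,
      THEN conjunct1]
  note t8 = tds[THEN conjunct2, THEN conjunct2, THEN conjunct2, THEN conjunct2, THEN conjunct2, THEN conjunct2,
      THEN conjunct2, THEN conjunct1]
  note t9 = tds[THEN conjunct2, THEN conjunct2, THEN conjunct2, THEN conjunct2, THEN conjunct2, THEN conjunct2,
      THEN conjunct2, THEN conjunct2, THEN conjunct1]
  note t10 = tds[THEN conjunct2, THEN conjunct2, THEN conjunct2, THEN conjunct2, THEN conjunct2, THEN conjunct2,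
      THEN conjunct2, THEN conjunct2, THEN conjunct2]
  interpret tsys n d A As K t ?th ?ths
  proof (unfold_locales)
    show "A \<in> carrier_mat n n" by (rule t1)
    show "As \<in> carrier_mat n n" by (rule t2)
    show "K \<in> carrier_mat n n" by (rule assms(7))
    show "\<And>v. v \<in> carrier_vec n \<Longrightarrow> v \<in> ES n A" by (rule diag_ES[OF t1 t3])
    show "\<And>v. v \<in> carrier_vec n \<Longrightarrow> v \<in> ES n As" by (rule diag_ES[OF t2 t4])
    show "inj_on ?th {0..d}" by (rule t5)
    show "inj_on ?ths {0..d}" by (rule t6)
    show "eigenvalues_of A = ?th ` {0..d}" by (rule t7)
    show "eigenvalues_of As = ?ths ` {0..d}" by (rule t8)
    show "\<forall>i\<le>d. \<forall>j\<le>d. (i > j + 1 \<or> j > i + 1) \<longrightarrow>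
        prim_idem As (?ths i) * A * prim_idem As (?ths j) = 0\<^sub>m n n"
    proof (intro allI impI)
      fix i j assume h: "i \<le> d" "j \<le> d" "i > j + 1 \<or> j > i + 1"
      show "prim_idem As (?ths i) * A * prim_idem As (?ths j) = 0\<^sub>m n n"
        using t9[rule_format, OF h] by (rule conjunct2)
    qed
    show "\<forall>i\<le>d. \<forall>j\<le>d. (i > j + 1 \<or> j > i + 1) \<longrightarrow>
        prim_idem A (?th i) * As * prim_idem A (?th j) = 0\<^sub>m n n"
    proof (intro allI impI)
      fix i j assume h: "i \<le> d" "j \<le> d" "i > j + 1 \<or> j > i + 1"
      show "prim_idem A (?th i) * As * prim_idem A (?th j) = 0\<^sub>m n n"
        using t9[rule_format, OF h] by (rule conjunct1)
    qed
    show "\<And>W. subspace_vec n W \<Longrightarrow> (\<forall>w\<in>W. A *\<^sub>v w \<in> W) \<Longrightarrow> (\<forall>w\<in>W. As *\<^sub>v w \<in> W)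
        \<Longrightarrow> W = {0\<^sub>v n} \<or> W = carrier_vec n"
      by (rule t10[rule_format], intro conjI)
    show "\<And>i u. i \<le> d \<Longrightarrow> u \<in> split_comp n d A ?th As ?ths i \<Longrightarrow> K *\<^sub>v u = ?ths i \<cdot>\<^sub>v u"
      by (rule assms(8)[rule_format])
  qed
  have e0: "?ths 0 = q powi int d" by simp
  show ?thesis using main_loc unfolding e0 .
qed



end
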